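(* In the setting below, as $\mathcal{O}$-modules $\operatorname{coker}(\lambda_P(\mathbf{J}))\cong\mathcal{O}^{mn-(n-t)}\oplus T$, where $T$ is the torsion submodule, and $\operatorname{length}_{\mathcal{O}}T = (n-t)\,w_{\mathbf{a}}$.
   Context: Let $\mathcal{O}$ be a discrete valuation ring with uniformiser $\varpi$ and normalised valuation $\nu$. Let $2\le m\le n$, $t=m-1$, $P=\mathcal{O}[X_{m\times n}]$, $X_{[a,b]}$ the submatrix of columns $a$ through $b$ of the $m\times n$ matrix of indeterminates $X$, and $f_k=\det X_{[k,k+t]}$ for $1\le k\le n-t$. $\mathbf{J}$ is the $mn\times(n-t)$ Jacobian matrix with entries $\partial f_k/\partial X_{ij}$ (rows indexed by variables). Fix integers $0\le a_1\le\cdots\le a_t$, $D=\operatorname{diag}(\varpi^{a_1},\ldots,\varpi^{a_t})$, $\Delta=\det D$. Let $\mathbf{a}\in\mathcal{O}^{m\times n}$ have zero last row and top $t$ entries of column $j$ equal to the $r$-th column of $D$, where $1\le r\le t$, $r\equiv j\pmod t$. $\lambda_P\colon P\to\mathcal{O}$ is $X_{ij}\mapsto\mathbf{a}_{ij}$, and $\lambda_P(\mathbf{J})\colon\mathcal{O}^{n-t}\to\mathcal{O}^{mn}$ is the entrywise evaluated matrix. $w_{\mathbf{a}} = \nu(\Delta) = \operatorname{length}_{\mathcal{O}}(\mathcal{O}/\mathrm{I}_t(\mathbf{a}))$. *)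

theory Defs
  imports "HOL-Combinatorics.Permutations"
begin

definition dvr :: "'a::idom \<Rightarrow> bool" where
  "dvr pi \<longleftrightarrow> pi \<noteq> 0 \<and> \<not> pi dvd 1 \<and>
     (\<forall>x. x \<noteq> 0 \<longrightarrow> (\<exists>u k. u dvd 1 \<and> x = u * pi ^ k))"

definition val :: "'a::idom \<Rightarrow> 'a \<Rightarrow> nat" where
  "val pi x = (THE k. \<exists>u. u dvd 1 \<and> x = u * pi ^ k)"

text \<open>The free module O^I on a finite index set I: finitely supported functions on I.\<close>
definition free_mod :: "'i set \<Rightarrow> ('i \<Rightarrow> 'a::zero) set" where
  "free_mod I = {v. \<forall>x. x \<notin> I \<longrightarrow> v x = 0}"

definition mat_vec :: "'c set \<Rightarrow> ('r \<Rightarrow> 'c \<Rightarrow> 'a::comm_ring_1) \<Rightarrow> ('c \<Rightarrow> 'a) \<Rightarrow> 'r \<Rightarrow> 'a" where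
  "mat_vec C A x = (\<lambda>r. \<Sum>c\<in>C. A r c * x c)"

definition mat_image :: "'c set \<Rightarrow> ('r \<Rightarrow> 'c \<Rightarrow> 'a::comm_ring_1) \<Rightarrow> ('r \<Rightarrow> 'a) set" where
  "mat_image C A = {mat_vec C A x | x. x \<in> free_mod C}"

text \<open>Quotient module O^R / U, elements are cosets.\<close>
definition cls :: "('r \<Rightarrow> 'a::comm_ring_1) set \<Rightarrow> ('r \<Rightarrow> 'a) \<Rightarrow> ('r \<Rightarrow> 'a) set" where
  "cls U v = {(\<lambda>i. v i + w i) | w. w \<in> U}"

definition quot_carrier :: "'r set \<Rightarrow> ('r \<Rightarrow> 'a::comm_ring_1) set \<Rightarrow> ('r \<Rightarrow> 'a) set set" where
  "quot_carrier R U = cls U ` free_mod R"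

definition qrep :: "('r \<Rightarrow> 'a) set \<Rightarrow> 'r \<Rightarrow> 'a" where
  "qrep C = (SOME v. v \<in> C)"

definition qadd :: "('r \<Rightarrow> 'a::comm_ring_1) set \<Rightarrow> ('r \<Rightarrow> 'a) set \<Rightarrow> ('r \<Rightarrow> 'a) set \<Rightarrow> ('r \<Rightarrow> 'a) set" where
  "qadd U C D = cls U (\<lambda>i. qrep C i + qrep D i)"

definition qscale :: "('r \<Rightarrow> 'a::comm_ring_1) set \<Rightarrow> 'a \<Rightarrow> ('r \<Rightarrow> 'a) set \<Rightarrow> ('r \<Rightarrow> 'a) set" where
  "qscale U s C = cls U (\<lambda>i. s * qrep C i)"

definition qzero :: "('r \<Rightarrow> 'a::comm_ring_1) set \<Rightarrow> ('r \<Rightarrow> 'a) set" where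
  "qzero U = cls U (\<lambda>i. 0)"

definition coker :: "'r set \<Rightarrow> 'c set \<Rightarrow> ('r \<Rightarrow> 'c \<Rightarrow> 'a::comm_ring_1) \<Rightarrow> ('r \<Rightarrow> 'a) set set" where
  "coker R C A = quot_carrier R (mat_image C A)"

definition torsion_part :: "'r set \<Rightarrow> 'c set \<Rightarrow> ('r \<Rightarrow> 'c \<Rightarrow> 'a::comm_ring_1) \<Rightarrow> ('r \<Rightarrow> 'a) set set" where
  "torsion_part R C A =
     {X \<in> coker R C A. \<exists>s. s \<noteq> 0 \<and> qscale (mat_image C A) s X = qzero (mat_image C A)}"

definition mod_iso ::
  "'m set \<Rightarrow> ('m \<Rightarrow> 'm \<Rightarrow> 'm) \<Rightarrow> ('a \<Rightarrow> 'm \<Rightarrow> 'm) \<Rightarrow>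
   'n set \<Rightarrow> ('n \<Rightarrow> 'n \<Rightarrow> 'n) \<Rightarrow> ('a \<Rightarrow> 'n \<Rightarrow> 'n) \<Rightarrow> bool" where
  "mod_iso M addM scM N addN scN \<longleftrightarrow>
     (\<exists>\<phi>. bij_betw \<phi> M N \<and>
          (\<forall>x\<in>M. \<forall>y\<in>M. \<phi> (addM x y) = addN (\<phi> x) (\<phi> y)) \<and>
          (\<forall>s. \<forall>x\<in>M. \<phi> (scM s x) = scN s (\<phi> x)))"

definition submod ::
  "'m set \<Rightarrow> ('m \<Rightarrow> 'm \<Rightarrow> 'm) \<Rightarrow> ('a \<Rightarrow> 'm \<Rightarrow> 'm) \<Rightarrow> 'm \<Rightarrow> 'm set \<Rightarrow> bool" where
  "submod M add sc z S \<longleftrightarrow> S \<subseteq> M \<and> z \<in> S \<and>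
     (\<forall>x\<in>S. \<forall>y\<in>S. add x y \<in> S) \<and> (\<forall>s. \<forall>x\<in>S. sc s x \<in> S)"

definition submod_chain ::
  "'m set \<Rightarrow> ('m \<Rightarrow> 'm \<Rightarrow> 'm) \<Rightarrow> ('a \<Rightarrow> 'm \<Rightarrow> 'm) \<Rightarrow> 'm \<Rightarrow> (nat \<Rightarrow> 'm set) \<Rightarrow> nat \<Rightarrow> bool" where
  "submod_chain M add sc z S l \<longleftrightarrow>
     (\<forall>i\<le>l. submod M add sc z (S i)) \<and> (\<forall>i<l. S i \<subset> S (Suc i))"

definition has_length ::
  "'m set \<Rightarrow> ('m \<Rightarrow> 'm \<Rightarrow> 'm) \<Rightarrow> ('a \<Rightarrow> 'm \<Rightarrow> 'm) \<Rightarrow> 'm \<Rightarrow> nat \<Rightarrow> bool" where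
  "has_length M add sc z l \<longleftrightarrow>
     (\<exists>S. submod_chain M add sc z S l) \<and> (\<forall>S k. submod_chain M add sc z S k \<longrightarrow> k \<le> l)"

text \<open>The point a in O^(m x n) (1-based indices, t = m - 1): last row zero; the top t entries
of column j are the r-th column of D = diag(pi^e_1,...,pi^e_t), r = ((j-1) mod t) + 1.\<close>
definition pt :: "'a::comm_ring_1 \<Rightarrow> nat \<Rightarrow> (nat \<Rightarrow> nat) \<Rightarrow> nat \<Rightarrow> nat \<Rightarrow> 'a" where
  "pt pi m e i j = (if 1 \<le> i \<and> i < m \<and> i = (j - 1) mod (m - 1) + 1 then pi ^ e i else 0)"

text \<open>Evaluation at a point P of the partial derivative with respect to X_ij of
f_k = det X_[k,k+t] = sum over sigma permuting {1..m} of sign sigma * prod_i' X_(i', k + sigma i' - 1)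
(Leibniz formula). Since each monomial contains X_ij at most once (with exponent 1), the
derivative is the sum over those sigma with k + sigma i - 1 = j of the product over i' ~= i.
Rows are indexed by variables (i,j), columns by k in {1..n-t}; entries outside are 0.\<close>
definition jac_eval :: "nat \<Rightarrow> nat \<Rightarrow> (nat \<Rightarrow> nat \<Rightarrow> 'a::comm_ring_1) \<Rightarrow> nat \<times> nat \<Rightarrow> nat \<Rightarrow> 'a" where
  "jac_eval m n P ij k =
     (case ij of (i, j) \<Rightarrow>
       if i \<in> {1..m} \<and> j \<in> {1..n} \<and> k \<in> {1..n - (m - 1)} then
         (\<Sum>\<sigma> \<in> {\<sigma>. \<sigma> permutes {1..m} \<and> k + \<sigma> i - 1 = j}.
            of_int (sign \<sigma>) * (\<Prod>i' \<in> {1..m} - {i}. P i' (k + \<sigma> i' - 1)))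
       else 0)"

end

theory Submission
  imports Defs
begin

definition sm :: "('i \<Rightarrow> 'a::comm_ring_1) set \<Rightarrow> bool" where
 "sm W \<longleftrightarrow> (\<lambda>i. 0) \<in> W \<and> (\<forall>x\<in>W. \<forall>y\<in>W. (\<lambda>i. x i + y i) \<in> W) \<and> (\<forall>s. \<forall>x\<in>W. (\<lambda>i. s * x i) \<in> W)"

definition msum :: "('i \<Rightarrow> 'a::comm_ring_1) set \<Rightarrow> ('i \<Rightarrow> 'a) set \<Rightarrow> ('i \<Rightarrow> 'a) set" where
 "msum A B = {(\<lambda>i. a i + b i) | a b. a \<in> A \<and> b \<in> B}"

lemma smD:
  "sm W \<Longrightarrow> (\<lambda>i. 0) \<in> W"
  "sm W \<Longrightarrow> x \<in> W \<Longrightarrow> y \<in> W \<Longrightarrow> (\<lambda>i. x i + y i) \<in> W"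
  "sm W \<Longrightarrow> x \<in> W \<Longrightarrow> (\<lambda>i. s * x i) \<in> W"
  unfolding sm_def by blast+

lemma sm_diff: "sm W \<Longrightarrow> x \<in> W \<Longrightarrow> y \<in> W \<Longrightarrow> (\<lambda>i. x i - y i) \<in> W"
  using smD(2)[of W x "\<lambda>i. (-1) * y i"] smD(3)[of W y "-1"] by simp

lemma sm_Int: "sm A \<Longrightarrow> sm B \<Longrightarrow> sm (A \<inter> B)"
  unfolding sm_def by (intro conjI ballI allI; simp)

lemma msumI: "a \<in> A \<Longrightarrow> b \<in> B \<Longrightarrow> f = (\<lambda>i. a i + b i) \<Longrightarrow> f \<in> msum A B"
  unfolding msum_def by blast

lemma msumE: "f \<in> msum A B \<Longrightarrow> (\<And>a b. a \<in> A \<Longrightarrow> b \<in> B \<Longrightarrow> f = (\<lambda>i. a i + b i) \<Longrightarrow> P) \<Longrightarrow> P"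
  unfolding msum_def by blast

lemma sm_msum: assumes A: "sm A" and B: "sm B" shows "sm (msum A B)"
  unfolding sm_def
proof (intro conjI ballI allI)
  show "(\<lambda>i. 0) \<in> msum A B" by (rule msumI[OF smD(1)[OF A] smD(1)[OF B]]) simp
  fix x y assume x: "x \<in> msum A B" and y: "y \<in> msum A B"
  obtain a b where ab: "a \<in> A" "b \<in> B" "x = (\<lambda>i. a i + b i)" using x by (rule msumE)
  obtain a' b' where ab': "a' \<in> A" "b' \<in> B" "y = (\<lambda>i. a' i + b' i)" using y by (rule msumE)
  show "(\<lambda>i. x i + y i) \<in> msum A B"
    by (rule msumI[OF smD(2)[OF A ab(1) ab'(1)] smD(2)[OF B ab(2) ab'(2)]]) (simp add: ab ab' algebra_simps)
next
  fix s x assume x: "x \<in> msum A B"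
  obtain a b where ab: "a \<in> A" "b \<in> B" "x = (\<lambda>i. a i + b i)" using x by (rule msumE)
  show "(\<lambda>i. s * x i) \<in> msum A B"
    by (rule msumI[OF smD(3)[OF A ab(1), of s] smD(3)[OF B ab(2), of s]]) (simp add: ab algebra_simps)
qed

lemma msum_left: "sm B \<Longrightarrow> A \<subseteq> msum A B"
  by (auto intro!: msumI dest: smD(1))

lemma msum_right: "sm A \<Longrightarrow> B \<subseteq> msum A B"
  by (auto intro!: msumI dest: smD(1))

lemma msum_le: "sm C \<Longrightarrow> A \<subseteq> C \<Longrightarrow> B \<subseteq> C \<Longrightarrow> msum A B \<subseteq> C"
proof
  fix x assume "sm C" "A \<subseteq> C" "B \<subseteq> C" "x \<in> msum A B"
  then obtain a b where "a \<in> A" "b \<in> B" "x = (\<lambda>i. a i + b i)" by (elim msumE)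
  then show "x \<in> C" using smD(2)[of C a b] \<open>sm C\<close> \<open>A \<subseteq> C\<close> \<open>B \<subseteq> C\<close> by blast
qed

lemma modular:
  assumes "sm W1" "sm W2" "sm M" "W1 \<subseteq> W2" "W1 \<inter> M = W2 \<inter> M" "msum W1 M = msum W2 M"
  shows "W1 = W2"
proof
  show "W2 \<subseteq> W1"
  proof
    fix x assume x: "x \<in> W2"
    then have "x \<in> msum W1 M" using msum_left[OF assms(3), of W2] assms(6) by blast
    then obtain a b where ab: "a \<in> W1" "b \<in> M" "x = (\<lambda>i. a i + b i)" by (rule msumE)
    have "(\<lambda>i. x i - a i) \<in> W2" using sm_diff[OF assms(2) x] ab assms(4) by blast
    moreover have "(\<lambda>i. x i - a i) = b" using ab by auto
    ultimately have "b \<in> W1" using ab assms(5) by blast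
    then show "x \<in> W1" using ab smD(2)[OF assms(1)] by blast
  qed
qed (use assms in auto)

lemma mono_chain: "(\<forall>j<l. W j \<subseteq> W (Suc j)) \<Longrightarrow> i \<le> j \<Longrightarrow> j \<le> l \<Longrightarrow> W i \<subseteq> W j"
proof (induction j)
  case (Suc j)
  then show ?case by (metis le_SucE Suc_le_lessD subset_trans order_refl Suc_leD)
qed auto

lemma chain_bound:
  assumes "\<forall>i\<le>L. sm (M i)" "\<forall>i<L. M i \<subseteq> M (Suc i)"
    "\<forall>i<L. \<forall>W. sm W \<and> M i \<subseteq> W \<and> W \<subseteq> M (Suc i) \<longrightarrow> W = M i \<or> W = M (Suc i)"
    "\<forall>j\<le>l. sm (W j) \<and> M 0 \<subseteq> W j \<and> W j \<subseteq> M L" "\<forall>j<l. W j \<subseteq> W (Suc j)"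
  shows "card {j. j < l \<and> W j \<noteq> W (Suc j)} \<le> L"
  using assms
proof (induction L arbitrary: W)
  case 0
  then have "\<forall>j\<le>l. W j = M 0" by auto
  then have "{j. j < l \<and> W j \<noteq> W (Suc j)} = {}" by auto
  then show ?case by simp
next
  case (Suc L)
  define W' where "W' j = W j \<inter> M L" for j
  define V where "V j = msum (W j) (M L)" for j
  have M0L: "M 0 \<subseteq> M L" using mono_chain[of L M 0 L] Suc.prems(2) by auto
  have IH: "card {j. j < l \<and> W' j \<noteq> W' (Suc j)} \<le> L"
    apply (rule Suc.IH)
    using Suc.prems M0L by (auto simp: W'_def intro: sm_Int)
  have V: "\<forall>j\<le>l. V j = M L \<or> V j = M (Suc L)"
  proof (intro allI impI)
    fix j assume j: "j \<le> l"
    show "V j = M L \<or> V j = M (Suc L)"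
      using Suc.prems(3)[rule_format, of L "V j"] Suc.prems(1,2,4) j
        sm_msum[of "W j" "M L"] msum_right[of "W j" "M L"] msum_le[of "M (Suc L)" "W j" "M L"]
      unfolding V_def by auto
  qed
  have Vmono: "\<forall>j<l. V j \<subseteq> V (Suc j)"
  proof (intro allI impI subsetI)
    fix j x assume "j < l" "x \<in> V j"
    then obtain a b where "a \<in> W j" "b \<in> M L" "x = (\<lambda>i. a i + b i)" unfolding V_def by (elim msumE)
    then show "x \<in> V (Suc j)" unfolding V_def using Suc.prems(5) \<open>j < l\<close> by (intro msumI[of a _ b]) auto
  qed
  have sub: "{j. j < l \<and> W j \<noteq> W (Suc j)} \<subseteq> {j. j < l \<and> W' j \<noteq> W' (Suc j)} \<union> {j. j < l \<and> V j \<noteq> V (Suc j)}"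
  proof
    fix j assume "j \<in> {j. j < l \<and> W j \<noteq> W (Suc j)}"
    then have j: "j < l" "W j \<noteq> W (Suc j)" by auto
    show "j \<in> {j. j < l \<and> W' j \<noteq> W' (Suc j)} \<union> {j. j < l \<and> V j \<noteq> V (Suc j)}"
    proof (rule ccontr)
      assume "j \<notin> {j. j < l \<and> W' j \<noteq> W' (Suc j)} \<union> {j. j < l \<and> V j \<noteq> V (Suc j)}"
      then have "W' j = W' (Suc j)" "V j = V (Suc j)" using j by auto
      then have "W j = W (Suc j)"
        using modular[of "W j" "W (Suc j)" "M L"] Suc.prems(1,4,5) j unfolding W'_def V_def by auto
      then show False using j by simp
    qed
  qed
  have B: "card {j. j < l \<and> V j \<noteq> V (Suc j)} \<le> 1"
  proof -
    have "\<forall>a\<in>{j. j < l \<and> V j \<noteq> V (Suc j)}. \<forall>b\<in>{j. j < l \<and> V j \<noteq> V (Suc j)}. a = b"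
    proof (intro ballI, rule ccontr)
      have key: "V j = M L \<and> V (Suc j) = M (Suc L)" if "j < l" "V j \<noteq> V (Suc j)" for j
      proof -
        have "V j = M L \<or> V j = M (Suc L)" "V (Suc j) = M L \<or> V (Suc j) = M (Suc L)" "V j \<subseteq> V (Suc j)"
          using V Vmono that by auto
        moreover have "M L \<subseteq> M (Suc L)" using Suc.prems(2) by auto
        ultimately show ?thesis using that(2) by blast
      qed
      fix a b assume ab: "a \<in> {j. j < l \<and> V j \<noteq> V (Suc j)}" "b \<in> {j. j < l \<and> V j \<noteq> V (Suc j)}" "a \<noteq> b"
      have *: "V (Suc a) \<subseteq> V b" if "a < b" "a \<in> {j. j < l \<and> V j \<noteq> V (Suc j)}" "b \<in> {j. j < l \<and> V j \<noteq> V (Suc j)}" for a b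
        using mono_chain[OF Vmono, of "Suc a" b] that by auto
      have MLS: "M L \<subseteq> M (Suc L)" using Suc.prems(2) by auto
      have **: False if "a < b" "a \<in> {j. j < l \<and> V j \<noteq> V (Suc j)}" "b \<in> {j. j < l \<and> V j \<noteq> V (Suc j)}" for a b
      proof -
        have 1: "V (Suc a) = M (Suc L)" using key that(2) by blast
        have 2: "V b = M L" "V (Suc b) = M (Suc L)" using key that(3) by blast+
        have "M (Suc L) \<subseteq> M L" using *[OF that] 1 2 by simp
        then have "V b = V (Suc b)" using 2 MLS by blast
        then show False using that(3) by blast
      qed
      show False
      proof (cases "a < b")
        case True
        then show ?thesis using **[OF True ab(1,2)] by blast
      next
        case False
        then have "b < a" using ab by auto
        then show ?thesis using **[OF _ ab(2,1)] by blast
      qed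
    qed
    then show ?thesis by (simp add: card_le_Suc0_iff_eq)
  qed
  have "card {j. j < l \<and> W j \<noteq> W (Suc j)} \<le> card ({j. j < l \<and> W' j \<noteq> W' (Suc j)} \<union> {j. j < l \<and> V j \<noteq> V (Suc j)})"
    by (rule card_mono[OF _ sub]) auto
  also have "\<dots> \<le> L + 1" using card_Un_le[of "{j. j < l \<and> W' j \<noteq> W' (Suc j)}" "{j. j < l \<and> V j \<noteq> V (Suc j)}"] IH B by linarith
  finally show ?case by simp
qed

lemma cls_mem: "sm U \<Longrightarrow> v \<in> cls U v"
  unfolding cls_def using smD(1)[of U] by force

lemma cls_memE: "x \<in> cls U v \<Longrightarrow> (\<And>w. w \<in> U \<Longrightarrow> x = (\<lambda>i. v i + w i) \<Longrightarrow> P) \<Longrightarrow> P"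
  unfolding cls_def by blast

lemma clsI: "w \<in> U \<Longrightarrow> x = (\<lambda>i. v i + w i) \<Longrightarrow> x \<in> cls U v"
  unfolding cls_def by blast

lemma cls_eq_iff: assumes U: "sm U" shows "cls U v = cls U v' \<longleftrightarrow> (\<lambda>i. v i - v' i) \<in> U"
proof
  assume "cls U v = cls U v'"
  then have "v \<in> cls U v'" using cls_mem[OF U, of v] by simp
  then obtain w where "w \<in> U" "v = (\<lambda>i. v' i + w i)" by (elim cls_memE)
  moreover then have "(\<lambda>i. v i - v' i) = w" by auto
  ultimately show "(\<lambda>i. v i - v' i) \<in> U" by simp
next
  assume d: "(\<lambda>i. v i - v' i) \<in> U"
  have 1: "cls U v \<subseteq> cls U v'" if d: "(\<lambda>i. v i - v' i) \<in> U" for v v'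
  proof
    fix x assume "x \<in> cls U v"
    then obtain w where w: "w \<in> U" "x = (\<lambda>i. v i + w i)" by (elim cls_memE)
    have "(\<lambda>i. (v i - v' i) + w i) \<in> U" using smD(2)[OF U d w(1)] by simp
    moreover have "x = (\<lambda>i. v' i + ((v i - v' i) + w i))" using w by auto
    ultimately show "x \<in> cls U v'" by (rule clsI)
  qed
  have "(\<lambda>i. v' i - v i) \<in> U" using smD(3)[OF U d, of "-1"] by simp
  then show "cls U v = cls U v'" using 1[OF d] 1[of v' v] by blast
qed

lemma qrep_cls: assumes U: "sm U" shows "(\<lambda>i. qrep (cls U v) i - v i) \<in> U"
proof -
  have "qrep (cls U v) \<in> cls U v" unfolding qrep_def by (rule someI[where P="\<lambda>x. x \<in> cls U v", OF cls_mem[OF U, of v]])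
  then obtain w where "w \<in> U" "qrep (cls U v) = (\<lambda>i. v i + w i)" by (elim cls_memE)
  then show ?thesis by simp
qed

lemma qadd_cls: assumes U: "sm U" shows "qadd U (cls U v) (cls U v') = cls U (\<lambda>i. v i + v' i)"
  unfolding qadd_def cls_eq_iff[OF U]
  using smD(2)[OF U qrep_cls[OF U, of v] qrep_cls[OF U, of v']] by (simp add: algebra_simps)

lemma qscale_cls: assumes U: "sm U" shows "qscale U s (cls U v) = cls U (\<lambda>i. s * v i)"
  unfolding qscale_def cls_eq_iff[OF U]
  using smD(3)[OF U qrep_cls[OF U, of v], of s] by (simp add: algebra_simps)

lemma mat_vec_add: "mat_vec C A (\<lambda>i. x i + y i) = (\<lambda>r. mat_vec C A x r + mat_vec C A y r)"
  unfolding mat_vec_def by (simp add: algebra_simps sum.distrib)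

lemma mat_vec_scale: "mat_vec C A (\<lambda>i. s * x i) = (\<lambda>r. s * mat_vec C A x r)"
  unfolding mat_vec_def by (simp add: algebra_simps sum_distrib_left)

lemma sm_free_mod: "sm (free_mod I)"
  unfolding sm_def free_mod_def by auto

lemma sm_mat_image: "sm (mat_image C A)"
  unfolding sm_def
proof (intro conjI ballI allI)
  show "(\<lambda>i. 0) \<in> mat_image C A" unfolding mat_image_def
    by (rule CollectI, rule exI[of _ "\<lambda>i. 0"]) (auto simp: mat_vec_def free_mod_def)
  fix x y assume "x \<in> mat_image C A" "y \<in> mat_image C A"
  then obtain a b where "x = mat_vec C A a" "a \<in> free_mod C" "y = mat_vec C A b" "b \<in> free_mod C"
    unfolding mat_image_def by blast
  then show "(\<lambda>i. x i + y i) \<in> mat_image C A" unfolding mat_image_def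
    by (intro CollectI exI[of _ "\<lambda>i. a i + b i"]) (auto simp: mat_vec_add free_mod_def)
next
  fix s x assume "x \<in> mat_image C A"
  then obtain a where "x = mat_vec C A a" "a \<in> free_mod C"
    unfolding mat_image_def by blast
  then show "(\<lambda>i. s * x i) \<in> mat_image C A" unfolding mat_image_def
    by (intro CollectI exI[of _ "\<lambda>i. s * a i"]) (auto simp: mat_vec_scale free_mod_def)
qed

lemma mod_iso_inv:
  assumes bij: "bij_betw \<psi> A B"
    and clA: "\<And>x y. x \<in> A \<Longrightarrow> y \<in> A \<Longrightarrow> addA x y \<in> A" "\<And>s x. x \<in> A \<Longrightarrow> scA s x \<in> A"
    and hadd: "\<And>x y. x \<in> A \<Longrightarrow> y \<in> A \<Longrightarrow> \<psi> (addA x y) = addB (\<psi> x) (\<psi> y)"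
    and hsc: "\<And>s x. x \<in> A \<Longrightarrow> \<psi> (scA s x) = scB s (\<psi> x)"
  shows "mod_iso B addB scB A addA scA"
  unfolding mod_iso_def
proof (intro exI[of _ "inv_into A \<psi>"] conjI ballI allI)
  show b: "bij_betw (inv_into A \<psi>) B A" using bij by (rule bij_betw_inv_into)
  have inj: "inj_on \<psi> A" using bij bij_betw_def by blast
  have inv1: "\<psi> (inv_into A \<psi> x) = x" if "x \<in> B" for x
    using bij that by (simp add: bij_betw_def f_inv_into_f)
  have inA: "inv_into A \<psi> x \<in> A" if "x \<in> B" for x using b that bij_betwE by blast
  fix x y assume x: "x \<in> B" and y: "y \<in> B"
  have "addB x y = \<psi> (addA (inv_into A \<psi> x) (inv_into A \<psi> y))"
    using hadd[OF inA[OF x] inA[OF y]] inv1[OF x] inv1[OF y] by simp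
  then show "inv_into A \<psi> (addB x y) = addA (inv_into A \<psi> x) (inv_into A \<psi> y)"
    using inv_into_f_f[OF inj clA(1)[OF inA[OF x] inA[OF y]]] by simp
next
  have inj: "inj_on \<psi> A" using bij bij_betw_def by blast
  have b: "bij_betw (inv_into A \<psi>) B A" using bij by (rule bij_betw_inv_into)
  have inv1: "\<psi> (inv_into A \<psi> x) = x" if "x \<in> B" for x
    using bij that by (simp add: bij_betw_def f_inv_into_f)
  have inA: "inv_into A \<psi> x \<in> A" if "x \<in> B" for x using b that bij_betwE by blast
  fix s x assume x: "x \<in> B"
  have "scB s x = \<psi> (scA s (inv_into A \<psi> x))"
    using hsc[OF inA[OF x]] inv1[OF x] by simp
  then show "inv_into A \<psi> (scB s x) = scA s (inv_into A \<psi> x)"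
    using inv_into_f_f[OF inj clA(2)[OF inA[OF x]]] by simp
qed

lemma mod_inj_window:
  fixes a b t :: nat
  assumes "a mod t = b mod t" "a \<le> b" "b < a + t"
  shows "a = b"
proof -
  have "b mod t = a mod t" using assms(1) by simp
  then have "t dvd (b - a)" using mod_eq_dvd_iff_nat[OF assms(2), of t] by blast
  moreover have "b - a < t" using assms(2,3) by simp
  ultimately have "\<not> 0 < b - a" using nat_dvd_not_less by blast
  then show ?thesis using assms(2) by simp
qed

locale jsetup =
  fixes pi :: "'a::idom" and m n :: nat and e :: "nat \<Rightarrow> nat"
  assumes dvr: "dvr pi" and m2: "2 \<le> m" and mn: "m \<le> n"
begin

abbreviation "t \<equiv> m - 1"
abbreviation "C \<equiv> {1..n - t}"
abbreviation "R \<equiv> {1..m} \<times> {1..n}"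
abbreviation "J \<equiv> jac_eval m n (pt pi m e)"

definition Delta :: 'a where "Delta = (\<Prod>i = 1..t. pi ^ e i)"

definition hh :: "nat \<Rightarrow> nat \<Rightarrow> nat" where "hh k c = (k + c - 1 - 1) mod t + 1"

definition G :: "nat \<Rightarrow> nat \<Rightarrow> (nat \<Rightarrow> nat) set" where
  "G k j = {\<sigma>. (\<sigma> permutes {1..m} \<and> k + \<sigma> m - 1 = j) \<and> (\<forall>i'\<in>{1..t}. hh k (\<sigma> i') = i')}"

lemma t_pos: "t \<ge> 1" using m2 by simp

lemma jac_not_m:
  assumes "i \<noteq> m" shows "J (i, j) k = 0"
proof -
  have "(\<Prod>i' \<in> {1..m} - {i}. pt pi m e i' (k + \<sigma> i' - 1)) = 0" for \<sigma>
  proof -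
    have "m \<in> {1..m} - {i}" using assms m2 by auto
    moreover have "pt pi m e m (k + \<sigma> m - 1) = 0" unfolding pt_def by simp
    ultimately show ?thesis by (meson finite_Diff finite_atLeastAtMost prod_zero_iff)
  qed
  then show ?thesis unfolding jac_eval_def case_prod_conv by (simp del: prod_zero_iff)
qed

lemma jac_m:
  assumes "j \<in> {1..n}" "k \<in> C"
  shows "J (m, j) k = (\<Sum>\<sigma>\<in>G k j. of_int (sign \<sigma>)) * Delta"
proof -
  define S where "S = {\<sigma>. \<sigma> permutes {1..m} \<and> k + \<sigma> m - 1 = j}"
  have finS: "finite S" unfolding S_def
    by (rule finite_subset[OF _ finite_permutations[of "{1..m}"]]) auto
  have Dm: "{1..m} - {m} = {1..t}" using m2 by auto
  have prodv: "(\<Prod>i' \<in> {1..m} - {m}. pt pi m e i' (k + \<sigma> i' - 1)) =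
      (if (\<forall>i'\<in>{1..t}. hh k (\<sigma> i') = i') then Delta else 0)" for \<sigma>
  proof (cases "\<forall>i'\<in>{1..t}. hh k (\<sigma> i') = i'")
    case True
    then have "(\<Prod>i' \<in> {1..t}. pt pi m e i' (k + \<sigma> i' - 1)) = (\<Prod>i' \<in> {1..t}. pi ^ e i')"
      by (intro prod.cong) (auto simp: pt_def hh_def)
    then show ?thesis by (simp only: if_P[OF True] Dm Delta_def)
  next
    case False
    then obtain i' where i': "i' \<in> {1..t}" "hh k (\<sigma> i') \<noteq> i'" by blast
    then have "pt pi m e i' (k + \<sigma> i' - 1) = 0" unfolding pt_def hh_def by auto
    then have "(\<Prod>i' \<in> {1..t}. pt pi m e i' (k + \<sigma> i' - 1)) = 0"
      using i' by (meson finite_atLeastAtMost prod_zero_iff)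
    then show ?thesis by (simp only: if_not_P[OF False] Dm)
  qed
  have "J (m, j) k = (\<Sum>\<sigma>\<in>S. of_int (sign \<sigma>) * (if (\<forall>i'\<in>{1..t}. hh k (\<sigma> i') = i') then Delta else 0))"
    unfolding jac_eval_def S_def using assms m2 prodv by simp
  also have "\<dots> = (\<Sum>\<sigma>\<in>S. if (\<forall>i'\<in>{1..t}. hh k (\<sigma> i') = i') then of_int (sign \<sigma>) * Delta else 0)"
    by (intro sum.cong) auto
  also have "\<dots> = (\<Sum>\<sigma>\<in>{\<sigma>\<in>S. \<forall>i'\<in>{1..t}. hh k (\<sigma> i') = i'}. of_int (sign \<sigma>) * Delta)"
    by (rule sum.inter_filter[OF finS, symmetric])
  also have "{\<sigma>\<in>S. \<forall>i'\<in>{1..t}. hh k (\<sigma> i') = i'} = G k j" unfolding S_def G_def by auto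
  finally show ?thesis by (simp add: sum_distrib_right)
qed

end

context jsetup
begin

lemma hh_1_m: "k \<ge> 1 \<Longrightarrow> hh k 1 = hh k m"
proof -
  assume k: "k \<ge> 1"
  have 1: "k + m - 1 - 1 = (k - 1) + t" using k m2 by simp
  have 2: "k + 1 - 1 - 1 = k - 1" by simp
  show ?thesis unfolding hh_def 1 2 mod_add_self2 ..
qed

lemma hh_range: "hh k c \<in> {1..t}"
  unfolding hh_def using t_pos by (simp add: Suc_le_eq)

lemma perm_image_D:
  assumes "\<sigma> permutes {1..m}" shows "\<sigma> ` {1..t} = {1..m} - {\<sigma> m}"
proof -
  have Dm: "{1..t} = {1..m} - {m}" using m2 by auto
  have "\<sigma> ` ({1..m} - {m}) = \<sigma> ` {1..m} - \<sigma> ` {m}"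
    by (rule image_set_diff[OF permutes_inj[OF assms]])
  then show ?thesis unfolding Dm permutes_image[OF assms] by simp
qed

lemma G_props:
  assumes "\<sigma> \<in> G k j"
  shows "\<sigma> permutes {1..m}" "k + \<sigma> m - 1 = j" "\<And>i'. i' \<in> {1..t} \<Longrightarrow> hh k (\<sigma> i') = i'"
  using assms unfolding G_def by auto

lemma G_sm: assumes "\<sigma> \<in> G k j" shows "\<sigma> m \<in> {1..m}"
  using permutes_in_image[OF G_props(1)[OF assms], of m] m2 by simp

lemma G_inj:
  assumes "\<sigma> \<in> G k j" shows "inj_on (hh k) ({1..m} - {\<sigma> m})"
proof (rule inj_onI)
  fix c c' assume c: "c \<in> {1..m} - {\<sigma> m}" and c': "c' \<in> {1..m} - {\<sigma> m}" and eq: "hh k c = hh k c'"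
  have im: "\<sigma> ` {1..t} = {1..m} - {\<sigma> m}" using perm_image_D[OF G_props(1)[OF assms]] .
  have "c \<in> \<sigma> ` {1..t}" "c' \<in> \<sigma> ` {1..t}" using c c' im by simp_all
  then obtain a b where a: "a \<in> {1..t}" "c = \<sigma> a" and b: "b \<in> {1..t}" "c' = \<sigma> b" by blast
  have "a = b" using G_props(3)[OF assms a(1)] G_props(3)[OF assms b(1)] eq a(2) b(2) by simp
  then show "c = c'" using a b by simp
qed

lemma G_j:
  assumes "\<sigma> \<in> G k j" "k \<ge> 1" shows "j = k \<or> j = k + t"
proof -
  have sm: "\<sigma> m \<in> {1..m}" by (rule G_sm[OF assms(1)])
  have "\<sigma> m = 1 \<or> \<sigma> m = m"
  proof (rule ccontr)
    assume "\<not> (\<sigma> m = 1 \<or> \<sigma> m = m)"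
    then have "1 \<in> {1..m} - {\<sigma> m}" "m \<in> {1..m} - {\<sigma> m}" using m2 by auto
    then have "1 = m" using inj_onD[OF G_inj[OF assms(1)] hh_1_m[OF assms(2)]] by blast
    then show False using m2 by simp
  qed
  then show ?thesis using G_props(2)[OF assms(1)] m2 by auto
qed

lemma G_unique:
  assumes "\<sigma> \<in> G k j" "\<tau> \<in> G k j" "k \<ge> 1" shows "\<sigma> = \<tau>"
proof
  fix x
  have sm: "\<sigma> m = \<tau> m" using G_props(2)[OF assms(1)] G_props(2)[OF assms(2)] G_sm[OF assms(1)] G_sm[OF assms(2)] assms(3) by simp
  show "\<sigma> x = \<tau> x"
  proof (cases "x \<in> {1..t}")
    case True
    have "\<sigma> x \<in> \<sigma> ` {1..t}" "\<tau> x \<in> \<tau> ` {1..t}" using True by simp_all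
    then have 1: "\<sigma> x \<in> {1..m} - {\<sigma> m}" "\<tau> x \<in> {1..m} - {\<sigma> m}"
      unfolding perm_image_D[OF G_props(1)[OF assms(1)]] perm_image_D[OF G_props(1)[OF assms(2)]] sm by simp_all
    have 2: "hh k (\<sigma> x) = hh k (\<tau> x)" using G_props(3)[OF assms(1) True] G_props(3)[OF assms(2) True] by simp
    show ?thesis by (rule inj_onD[OF G_inj[OF assms(1)] 2 1])
  next
    case False
    show ?thesis
    proof (cases "x = m")
      case True then show ?thesis using sm by simp
    next
      case F2: False
      then have "x \<notin> {1..m}" using False m2 by auto
      then show ?thesis using permutes_not_in[OF G_props(1)[OF assms(1)]] permutes_not_in[OF G_props(1)[OF assms(2)]] by simp
    qed
  qed
qed

lemma hh_inj_window:
  assumes k: "k \<ge> 1" and s: "s = 1 \<or> s = m" shows "inj_on (hh k) ({1..m} - {s})"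
proof -
  have win: "c' < c + t" if "c \<in> {1..m} - {s}" "c' \<in> {1..m} - {s}" for c c'
    using that s m2 by auto
  show ?thesis
  proof (rule inj_onI)
    fix c c' assume c: "c \<in> {1..m} - {s}" and c': "c' \<in> {1..m} - {s}" and eq: "hh k c = hh k c'"
    have eqm: "(k + c - 1 - 1) mod t = (k + c' - 1 - 1) mod t" using eq unfolding hh_def by simp
    have c1: "c \<ge> 1" "c' \<ge> 1" using c c' by auto
    show "c = c'"
    proof (cases "c \<le> c'")
      case True
      have "k + c - 1 - 1 = k + c' - 1 - 1"
        by (rule mod_inj_window[OF eqm]) (use True win[OF c c'] c1 k in auto)
      then show ?thesis using c1 k by simp
    next
      case False
      have "k + c' - 1 - 1 = k + c - 1 - 1"
        by (rule mod_inj_window[OF eqm[symmetric]]) (use False win[OF c' c] c1 k in auto)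
      then show ?thesis using c1 k by simp
    qed
  qed
qed

lemma G_exists:
  assumes k: "k \<ge> 1" and s: "s = 1 \<or> s = m" shows "\<exists>\<sigma>. \<sigma> \<in> G k (k + s - 1)"
proof -
  define Ds where "Ds = {1..m} - {s}"
  have sin: "s \<in> {1..m}" using s m2 by auto
  have inj: "inj_on (hh k) Ds" unfolding Ds_def by (rule hh_inj_window[OF k s])
  have cardD: "card Ds = t" unfolding Ds_def using sin by simp
  have img: "hh k ` Ds = {1..t}"
  proof (rule card_subset_eq)
    show "finite {1..t}" by simp
    show "hh k ` Ds \<subseteq> {1..t}" using hh_range by blast
    show "card (hh k ` Ds) = card {1..t}" using card_image[OF inj] cardD by simp
  qed
  have bij: "bij_betw (hh k) Ds {1..t}" using inj img by (simp add: bij_betw_def)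
  define \<sigma> where "\<sigma> x = (if x = m then s else if x \<in> {1..t} then the_inv_into Ds (hh k) x else x)" for x
  have eqf: "\<And>x. x \<in> {1..t} \<Longrightarrow> \<sigma> x = the_inv_into Ds (hh k) x"
  proof -
    fix x assume "x \<in> {1..t}"
    then have "x \<noteq> m" using m2 by auto
    then show "\<sigma> x = the_inv_into Ds (hh k) x" unfolding \<sigma>_def using \<open>x \<in> {1..t}\<close> by simp
  qed
  have \<sigma>t: "\<sigma> ` {1..t} = Ds"
  proof -
    have "\<sigma> ` {1..t} = the_inv_into Ds (hh k) ` {1..t}"
      by (rule image_cong[OF refl eqf])
    also have "\<dots> = Ds" using bij_betw_the_inv_into[OF bij] by (simp add: bij_betw_def)
    finally show ?thesis .
  qed
  have injt: "inj_on \<sigma> {1..t}"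
  proof -
    have "inj_on (the_inv_into Ds (hh k)) {1..t}" using inj_on_the_inv_into[OF inj] img by simp
    then show ?thesis using inj_on_cong[of "{1..t}" \<sigma> "the_inv_into Ds (hh k)", OF eqf] by simp
  qed
  have ins: "{1..m} = insert m {1..t}" using m2 by auto
  have mt: "m \<notin> {1..t}" using m2 by auto
  have sm: "\<sigma> m = s" unfolding \<sigma>_def by simp
  have "s \<notin> Ds" unfolding Ds_def by simp
  then have "\<sigma> m \<notin> \<sigma> ` ({1..t} - {m})" using mt \<sigma>t sm by simp
  then have injm: "inj_on \<sigma> {1..m}" unfolding ins inj_on_insert using injt by simp
  have imm: "\<sigma> ` {1..m} = {1..m}"
  proof -
    have "\<sigma> ` {1..m} = insert s Ds" unfolding ins image_insert \<sigma>t sm ..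
    also have "\<dots> = {1..m}" unfolding Ds_def using sin by (rule insert_Diff)
    finally show ?thesis .
  qed
  have perm: "\<sigma> permutes {1..m}"
  proof (rule bij_imp_permutes)
    show "bij_betw \<sigma> {1..m} {1..m}" using injm imm by (simp add: bij_betw_def)
    fix x assume x: "x \<notin> {1..m}"
    then have "x \<noteq> m" "x \<notin> {1..t}" using m2 by auto
    then show "\<sigma> x = x" unfolding \<sigma>_def by auto
  qed
  have good: "hh k (\<sigma> i') = i'" if "i' \<in> {1..t}" for i'
  proof -
    have "\<sigma> i' = the_inv_into Ds (hh k) i'" using eqf[OF that] .
    then show ?thesis using f_the_inv_into_f[OF inj] img that by simp
  qed
  have "\<sigma> \<in> G k (k + s - 1)" unfolding G_def mem_Collect_eq using perm good sm by blast
  then show ?thesis by blast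
qed

lemma G_single:
  assumes k: "k \<ge> 1" and j: "j = k \<or> j = k + t" shows "\<exists>\<sigma>. G k j = {\<sigma>}"
proof -
  obtain s where "s = 1 \<or> s = m" "j = k + s - 1"
  proof (cases "j = k")
    case True
    then show ?thesis using that[of 1] by simp
  next
    case False
    then have "j = k + m - 1" using j m2 by simp
    then show ?thesis using that[of m] by simp
  qed
  then obtain \<sigma> where "\<sigma> \<in> G k j" using G_exists[OF k] by blast
  then have "G k j = {\<sigma>}" using G_unique[OF _ _ k] by blast
  then show ?thesis by blast
qed

definition sgn_a :: "nat \<Rightarrow> 'a" where "sgn_a k = (\<Sum>\<sigma>\<in>G k k. of_int (sign \<sigma>))"
definition sgn_b :: "nat \<Rightarrow> 'a" where "sgn_b k = (\<Sum>\<sigma>\<in>G k (k + t). of_int (sign \<sigma>))"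

lemma sum_sign_single: "G k j = {\<sigma>} \<Longrightarrow> (\<Sum>\<sigma>\<in>G k j. (of_int (sign \<sigma>) :: 'a)) * (\<Sum>\<sigma>\<in>G k j. of_int (sign \<sigma>)) = 1"
  by (cases "evenperm \<sigma>") (auto simp: sign_def)

lemma sgn_a_sq: "k \<ge> 1 \<Longrightarrow> sgn_a k * sgn_a k = 1"
  using G_single[of k k] sum_sign_single unfolding sgn_a_def by blast

lemma sgn_b_sq: "k \<ge> 1 \<Longrightarrow> sgn_b k * sgn_b k = 1"
  using G_single[of k "k + t"] sum_sign_single unfolding sgn_b_def by blast

lemma G_empty: "k \<ge> 1 \<Longrightarrow> j \<noteq> k \<Longrightarrow> j \<noteq> k + t \<Longrightarrow> G k j = {}"
  using G_j by blast

lemma J_formula: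
  "J r k = (if k \<in> C \<and> r = (m, k) then sgn_a k * Delta
            else if k \<in> C \<and> r = (m, k + t) then sgn_b k * Delta else 0)"
proof (cases r)
  case (Pair i j)
  show ?thesis
  proof (cases "k \<in> C \<and> i = m \<and> j \<in> {1..n}")
    case True
    then have k1: "k \<ge> 1" "k + t \<le> n" by auto
    have "k \<noteq> k + t" using t_pos by simp
    then show ?thesis using Pair True jac_m[of j k] G_empty[OF k1(1), of j] unfolding sgn_a_def sgn_b_def by auto
  next
    case False
    have "J (i, j) k = 0"
    proof (cases "i = m")
      case True
      then show ?thesis using False unfolding jac_eval_def by auto
    next
      case False
      then show ?thesis by (rule jac_not_m)
    qed
    moreover have A: "\<not> (k \<in> C \<and> r = (m, k))" and B: "\<not> (k \<in> C \<and> r = (m, k + t))" using False Pair mn by auto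
    ultimately show ?thesis unfolding if_not_P[OF A] if_not_P[OF B] using Pair by simp
  qed
qed

end

lemma sm_sum:
  assumes W: "sm W" and fin: "finite A"
  shows "(\<forall>a\<in>A. f a \<in> W) \<Longrightarrow> (\<lambda>x. \<Sum>a\<in>A. f a x) \<in> W"
  using fin
proof (induction A rule: finite_induct)
  case empty
  then show ?case using smD(1)[OF W] by simp
next
  case (insert a A)
  have "(\<lambda>x. f a x + (\<lambda>x. \<Sum>a\<in>A. f a x) x) \<in> W"
    using smD(2)[OF W, of "f a" "\<lambda>x. \<Sum>a\<in>A. f a x"] insert by simp
  then show ?case using insert by simp
qed

context jsetup
begin

definition fv :: "nat \<Rightarrow> nat \<times> nat \<Rightarrow> 'a" where
  "fv k r = (if r = (m, k) then sgn_a k else if r = (m, k + t) then sgn_b k else 0)"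

definition Lm :: "(nat \<Rightarrow> 'a) \<Rightarrow> nat \<times> nat \<Rightarrow> 'a" where
  "Lm y = (\<lambda>r. \<Sum>k\<in>C. y k * fv k r)"

abbreviation "Rp \<equiv> R - {m} \<times> C"

lemma Lm_add: "Lm (\<lambda>k. y k + y' k) = (\<lambda>r. Lm y r + Lm y' r)"
  unfolding Lm_def by (simp add: algebra_simps sum.distrib)

lemma Lm_scale: "Lm (\<lambda>k. s * y k) = (\<lambda>r. s * Lm y r)"
  unfolding Lm_def by (simp add: algebra_simps sum_distrib_left)

lemma Lm_zero: "Lm (\<lambda>k. 0) = (\<lambda>r. 0)"
  unfolding Lm_def by simp

lemma Lm_diff: "Lm (\<lambda>k. y k - y' k) = (\<lambda>r. Lm y r - Lm y' r)"
  unfolding Lm_def by (simp add: algebra_simps sum_subtractf)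

lemma mat_vec_J: "mat_vec C J x = Lm (\<lambda>k. Delta * x k)"
proof
  fix r
  have "J r k * x k = Delta * x k * fv k r" if "k \<in> C" for k
    using that unfolding J_formula fv_def by (auto simp: algebra_simps)
  then show "mat_vec C J x r = Lm (\<lambda>k. Delta * x k) r"
    unfolding mat_vec_def Lm_def by (intro sum.cong) auto
qed

lemma U_eq: "mat_image C J = {Lm (\<lambda>k. Delta * x k) | x. x \<in> free_mod C}"
  unfolding mat_image_def mat_vec_J ..

lemma Lm_free: "Lm y \<in> free_mod R"
proof -
  have "Lm y r = 0" if "r \<notin> R" for r
  proof -
    have "fv k r = 0" if "k \<in> C" for k
      using that \<open>r \<notin> R\<close> m2 mn unfolding fv_def by auto
    then show ?thesis unfolding Lm_def by simp
  qed
  then show ?thesis unfolding free_mod_def by blast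
qed

lemma fv_mj: "fv k (m, j) = (if k = j then sgn_a k else 0) + (if k + t = j then sgn_b k else 0)"
  unfolding fv_def using t_pos by auto

lemma Lm_mj:
  assumes j: "j \<in> C"
  shows "Lm y (m, j) = y j * sgn_a j + (if t < j then y (j - t) * sgn_b (j - t) else 0)"
proof -
  have "Lm y (m, j) = (\<Sum>k\<in>C. (if k = j then y k * sgn_a k else 0) + (if k + t = j then y k * sgn_b k else 0))"
    unfolding Lm_def fv_mj by (intro sum.cong) (auto simp: algebra_simps)
  also have "\<dots> = (\<Sum>k\<in>C. if k = j then y k * sgn_a k else 0) + (\<Sum>k\<in>C. if k + t = j then y k * sgn_b k else 0)"
    by (rule sum.distrib)
  also have "(\<Sum>k\<in>C. if k = j then y k * sgn_a k else 0) = y j * sgn_a j"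
    using j by simp
  also have "(\<Sum>k\<in>C. if k + t = j then y k * sgn_b k else 0) = (if t < j then y (j - t) * sgn_b (j - t) else 0)"
  proof (cases "t < j")
    case True
    have "(\<Sum>k\<in>C. if k + t = j then y k * sgn_b k else 0) = (\<Sum>k\<in>C. if k = j - t then y k * sgn_b k else 0)"
      using True by (intro sum.cong) auto
    also have "\<dots> = y (j - t) * sgn_b (j - t)"
    proof -
      have "j - t \<in> C" using True j by auto
      then show ?thesis by simp
    qed
    finally show ?thesis using True by simp
  next
    case False
    have "(\<Sum>k\<in>C. if k + t = j then y k * sgn_b k else 0) = (\<Sum>k\<in>C. 0)"
      using False by (intro sum.cong) auto
    then show ?thesis using False by simp
  qed
  finally show ?thesis .
qed

lemma sgn_a_nz: "k \<ge> 1 \<Longrightarrow> sgn_a k \<noteq> 0"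
  using sgn_a_sq by fastforce

lemma Lm_inj:
  assumes y: "y \<in> free_mod C" and z: "\<forall>j\<in>C. Lm y (m, j) = 0"
  shows "y j = 0"
proof (induction j rule: less_induct)
  case (less j)
  show ?case
  proof (cases "j \<in> C")
    case False
    then show ?thesis using y unfolding free_mod_def by blast
  next
    case True
    have prev: "(if t < j then y (j - t) * sgn_b (j - t) else 0) = 0"
      using less[of "j - t"] t_pos by auto
    have "y j * sgn_a j = 0" using z True Lm_mj[OF True, of y] prev by simp
    then show ?thesis using sgn_a_nz[of j] True by simp
  qed
qed

definition DS :: "(nat \<times> nat \<Rightarrow> 'a) set" where
  "DS = {v. \<exists>y\<in>free_mod C. \<exists>z\<in>free_mod Rp. v = (\<lambda>r. Lm y r + z r)}"

lemma DSI: "y \<in> free_mod C \<Longrightarrow> z \<in> free_mod Rp \<Longrightarrow> v = (\<lambda>r. Lm y r + z r) \<Longrightarrow> v \<in> DS"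
  unfolding DS_def by blast

lemma sm_DS: "sm DS"
  unfolding sm_def
proof (intro conjI ballI allI)
  show "(\<lambda>i. 0) \<in> DS"
    by (rule DSI[of "\<lambda>k. 0" "\<lambda>r. 0"]) (auto simp: free_mod_def Lm_zero)
  fix v w assume "v \<in> DS" "w \<in> DS"
  then obtain y z y' z' where a: "y \<in> free_mod C" "z \<in> free_mod Rp" "v = (\<lambda>r. Lm y r + z r)"
    and b: "y' \<in> free_mod C" "z' \<in> free_mod Rp" "w = (\<lambda>r. Lm y' r + z' r)"
    unfolding DS_def by blast
  show "(\<lambda>i. v i + w i) \<in> DS"
    by (rule DSI[of "\<lambda>k. y k + y' k" "\<lambda>r. z r + z' r"]) (use a b in \<open>auto simp: free_mod_def Lm_add\<close>)
next
  fix s v assume "v \<in> DS"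
  then obtain y z where a: "y \<in> free_mod C" "z \<in> free_mod Rp" "v = (\<lambda>r. Lm y r + z r)"
    unfolding DS_def by blast
  show "(\<lambda>i. s * v i) \<in> DS"
    by (rule DSI[of "\<lambda>k. s * y k" "\<lambda>r. s * z r"]) (use a in \<open>auto simp: free_mod_def Lm_scale algebra_simps\<close>)
qed

definition delta :: "nat \<times> nat \<Rightarrow> nat \<times> nat \<Rightarrow> 'a" where
  "delta r = (\<lambda>x. if x = r then 1 else 0)"

lemma Lm_unit: assumes "k \<in> C" shows "Lm (\<lambda>k'. if k' = k then 1 else 0) = fv k"
proof
  fix r
  have "Lm (\<lambda>k'. if k' = k then 1 else 0) r = (\<Sum>k'\<in>C. if k' = k then fv k' r else 0)"
    unfolding Lm_def by (intro sum.cong) auto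
  also have "\<dots> = fv k r" using assms by simp
  finally show "Lm (\<lambda>k'. if k' = k then 1 else 0) r = fv k r" .
qed

lemma delta_Rp: "r \<in> Rp \<Longrightarrow> delta r \<in> DS"
  by (rule DSI[of "\<lambda>k. 0" "delta r"]) (auto simp: free_mod_def delta_def Lm_zero)

lemma delta_mC: "k \<in> C \<Longrightarrow> delta (m, k) \<in> DS"
proof (induction "n - k" arbitrary: k rule: less_induct)
  case less
  have k: "k \<ge> 1" "k + t \<le> n" using less.prems by auto
  have next_in: "delta (m, k + t) \<in> DS"
  proof (cases "k + t \<in> C")
    case True
    then show ?thesis using less.hyps[of "k + t"] t_pos k by simp
  next
    case False
    then have "(m, k + t) \<in> Rp" using k m2 by auto
    then show ?thesis by (rule delta_Rp)
  qed
  have fvin: "fv k \<in> DS"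
    by (rule DSI[of "\<lambda>k'. if k' = k then 1 else 0" "\<lambda>r. 0"])
       (use less.prems in \<open>auto simp: free_mod_def Lm_unit\<close>)
  have eq: "delta (m, k) = (\<lambda>r. (\<lambda>r. sgn_a k * fv k r) r + (\<lambda>r. (- (sgn_a k * sgn_b k)) * delta (m, k + t) r) r)"
  proof
    fix r
    show "delta (m, k) r = (\<lambda>r. sgn_a k * fv k r) r + (\<lambda>r. (- (sgn_a k * sgn_b k)) * delta (m, k + t) r) r"
      unfolding delta_def fv_def using sgn_a_sq[OF k(1)] t_pos by (auto simp: algebra_simps)
  qed
  show ?case unfolding eq
    by (rule smD(2)[OF sm_DS smD(3)[OF sm_DS fvin] smD(3)[OF sm_DS next_in]])
qed

lemma delta_R: "r \<in> R \<Longrightarrow> delta r \<in> DS"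
proof -
  assume r: "r \<in> R"
  show ?thesis
  proof (cases "r \<in> Rp")
    case True then show ?thesis by (rule delta_Rp)
  next
    case False
    then obtain k where "r = (m, k)" "k \<in> C" using r by auto
    then show ?thesis using delta_mC by simp
  qed
qed

lemma decomp: "v \<in> free_mod R \<Longrightarrow> v \<in> DS"
proof -
  assume v: "v \<in> free_mod R"
  have "(\<lambda>x. \<Sum>r\<in>R. (\<lambda>x. v r * delta r x) x) \<in> DS"
    by (rule sm_sum[OF sm_DS]) (auto intro: smD(3)[OF sm_DS delta_R])
  moreover have "(\<lambda>x. \<Sum>r\<in>R. (\<lambda>x. v r * delta r x) x) = v"
  proof
    fix x
    have "(\<Sum>r\<in>R. v r * delta r x) = (if x \<in> R then v x else 0)"
      unfolding delta_def by (simp add: if_distrib cong: if_cong)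
    also have "\<dots> = v x"
    proof -
      have "x \<notin> R \<Longrightarrow> v x = 0" using v unfolding free_mod_def by blast
      then show ?thesis by simp
    qed
    finally show "(\<Sum>r\<in>R. (\<lambda>x. v r * delta r x) x) = v x" by simp
  qed
  ultimately show ?thesis by simp
qed

end

context jsetup
begin

abbreviation "U \<equiv> mat_image C J"
abbreviation "T \<equiv> torsion_part R C J"

lemma smU: "sm U" by (rule sm_mat_image)

lemma Delta_pow: "Delta = pi ^ (\<Sum>i = 1..t. e i)"
  unfolding Delta_def by (simp add: power_sum)

lemma pi_nz: "pi \<noteq> 0" using dvr unfolding dvr_def by blast

lemma Delta_nz: "Delta \<noteq> 0" unfolding Delta_pow using pi_nz by simp

lemma Lm_inj':
  assumes "y \<in> free_mod C" "\<forall>j\<in>C. Lm y (m, j) = 0" shows "y = (\<lambda>k. 0)"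
  using Lm_inj[OF assms] by auto

lemma free_mod_C_diff: "(y :: nat \<Rightarrow> 'a) \<in> free_mod C \<Longrightarrow> y' \<in> free_mod C \<Longrightarrow> (\<lambda>k. y k - y' k) \<in> free_mod C"
  unfolding free_mod_def by auto

lemma inU_iff:
  assumes w: "w \<in> free_mod C"
  shows "Lm w \<in> U \<longleftrightarrow> (\<forall>k. Delta dvd w k)"
proof
  assume "Lm w \<in> U"
  then obtain x where x: "x \<in> free_mod C" "Lm w = Lm (\<lambda>k. Delta * x k)" unfolding U_eq by blast
  have "(\<lambda>k. w k - Delta * x k) \<in> free_mod C" using w x(1) unfolding free_mod_def by auto
  moreover have "\<forall>j\<in>C. Lm (\<lambda>k. w k - Delta * x k) (m, j) = 0" using x(2) unfolding Lm_diff by simp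
  ultimately have "(\<lambda>k. w k - Delta * x k) = (\<lambda>k. 0)" by (rule Lm_inj')
  then have "w k = Delta * x k" for k by (metis right_minus_eq)
  then show "\<forall>k. Delta dvd w k" by simp
next
  assume d: "\<forall>k. Delta dvd w k"
  define x where "x k = (if k \<in> C then (SOME c. w k = Delta * c) else 0)" for k
  have "w k = Delta * x k" for k
  proof (cases "k \<in> C")
    case True
    have "\<exists>c. w k = Delta * c" using d by (auto elim: dvdE)
    then show ?thesis unfolding x_def using True by (auto intro: someI_ex)
  next
    case False
    then show ?thesis using w unfolding x_def free_mod_def by auto
  qed
  then have "w = (\<lambda>k. Delta * x k)" by auto
  moreover have "x \<in> free_mod C" unfolding x_def free_mod_def by auto
  ultimately show "Lm w \<in> U" unfolding U_eq by blast
qed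

lemma cls_Lm_eq:
  assumes "y \<in> free_mod C" "y' \<in> free_mod C"
  shows "cls U (Lm y) = cls U (Lm y') \<longleftrightarrow> (\<forall>k. Delta dvd (y k - y' k))"
  unfolding cls_eq_iff[OF smU] Lm_diff[symmetric] using inU_iff[OF free_mod_C_diff[OF assms]] .

lemma coker_eq: "coker R C J = cls U ` free_mod R"
  unfolding coker_def quot_carrier_def ..

lemma T_char: "T = {cls U (Lm y) | y. y \<in> free_mod C}"
proof
  show "{cls U (Lm y) | y. y \<in> free_mod C} \<subseteq> T"
  proof
    fix X assume "X \<in> {cls U (Lm y) | y. y \<in> free_mod C}"
    then obtain y where y: "y \<in> free_mod C" "X = cls U (Lm y)" by blast
    have "X \<in> coker R C J" unfolding coker_eq y(2) using Lm_free by blast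
    moreover have "qscale U Delta X = qzero U"
    proof -
      have "qscale U Delta X = cls U (Lm (\<lambda>k. Delta * y k))" unfolding y(2) qscale_cls[OF smU] Lm_scale ..
      also have "\<dots> = qzero U" unfolding qzero_def cls_eq_iff[OF smU] unfolding U_eq using y(1) by auto
      finally show ?thesis .
    qed
    ultimately show "X \<in> T" unfolding torsion_part_def using Delta_nz by blast
  qed
next
  show "T \<subseteq> {cls U (Lm y) | y. y \<in> free_mod C}"
  proof
    fix X assume "X \<in> T"
    then obtain v s where v: "v \<in> free_mod R" "X = cls U v" and s: "s \<noteq> 0" "qscale U s X = qzero U"
      unfolding torsion_part_def coker_eq by blast
    have sv: "(\<lambda>r. s * v r) \<in> U"
      using s(2) unfolding v(2) qscale_cls[OF smU] qzero_def cls_eq_iff[OF smU] by simp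
    obtain y z where yz: "y \<in> free_mod C" "z \<in> free_mod Rp" "v = (\<lambda>r. Lm y r + z r)"
      using decomp[OF v(1)] unfolding DS_def by blast
    obtain x where x: "x \<in> free_mod C" "(\<lambda>r. s * v r) = Lm (\<lambda>k. Delta * x k)" using sv unfolding U_eq by blast
    have "(\<lambda>r. s * z r) = Lm (\<lambda>k. Delta * x k - s * y k)"
      unfolding Lm_diff Lm_scale[of s y] x(2)[symmetric] yz(3) by (auto simp: algebra_simps)
    moreover have wC: "(\<lambda>k. Delta * x k - s * y k) \<in> free_mod C" using x(1) yz(1) unfolding free_mod_def by auto
    moreover have "\<forall>j\<in>C. z (m, j) = 0"
    proof
      fix j assume "j \<in> C"
      then have "(m, j) \<notin> Rp" by simp
      then show "z (m, j) = 0" using yz(2) unfolding free_mod_def by blast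
    qed
    ultimately have "\<forall>j\<in>C. Lm (\<lambda>k. Delta * x k - s * y k) (m, j) = 0" by (metis mult_zero_right)
    then have "(\<lambda>k. Delta * x k - s * y k) = (\<lambda>k. 0)" by (rule Lm_inj'[OF wC])
    then have "(\<lambda>r. s * z r) = (\<lambda>r. 0)" using \<open>(\<lambda>r. s * z r) = _\<close> Lm_zero by simp
    then have "z = (\<lambda>r. 0)" using s(1) by (metis mult_eq_0_iff)
    then have "v = Lm y" using yz(3) by simp
    then show "X \<in> {cls U (Lm y) | y. y \<in> free_mod C}" using v(2) yz(1) by blast
  qed
qed

end

context jsetup
begin

abbreviation "NN \<equiv> card Rp"

lemma card_Rp: "NN = m * n - (n - t)"
proof -
  have "{m} \<times> C \<subseteq> R" using m2 mn by auto
  moreover have "card ({m} \<times> C) = n - t" by (simp add: card_cartesian_product)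
  ultimately show ?thesis using card_Diff_subset[of "{m} \<times> C" R] by (simp add: card_cartesian_product)
qed

definition rho :: "nat \<Rightarrow> nat \<times> nat" where
  "rho = (SOME h. bij_betw h {..<NN} Rp)"

lemma rho_bij: "bij_betw rho {..<NN} Rp"
proof -
  have "\<exists>h. bij_betw h {0..<NN} Rp" by (rule ex_bij_betw_nat_finite) simp
  then have "\<exists>h. bij_betw h {..<NN} Rp" by (simp add: lessThan_atLeast0)
  then show ?thesis unfolding rho_def by (rule someI_ex)
qed

definition ext :: "(nat \<Rightarrow> 'a) \<Rightarrow> nat \<times> nat \<Rightarrow> 'a" where
  "ext z = (\<lambda>r. if r \<in> Rp then z (inv_into {..<NN} rho r) else 0)"

lemma if_free: "(\<lambda>r. if r \<in> S then f r else 0) \<in> free_mod S"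
  unfolding free_mod_def by simp

lemma free_add: "a \<in> free_mod S \<Longrightarrow> b \<in> free_mod S \<Longrightarrow> (\<lambda>r. a r + (b r :: 'b::comm_ring_1)) \<in> free_mod S"
  unfolding free_mod_def by simp

lemma ext_free: "ext z \<in> free_mod Rp"
  unfolding ext_def by (rule if_free)

lemma ext_free_R: "ext z \<in> free_mod R"
  unfolding ext_def free_mod_def by auto

lemma ext_add: "ext (\<lambda>i. z i + z' i) = (\<lambda>r. ext z r + ext z' r)"
  unfolding ext_def by (rule ext) simp

lemma ext_scale: "ext (\<lambda>i. s * z i) = (\<lambda>r. s * ext z r)"
  unfolding ext_def by (rule ext) simp

lemma ext_rho: "i < NN \<Longrightarrow> ext z (rho i) = z i"
proof -
  assume i: "i < NN"
  have inj: "inj_on rho {..<NN}" using bij_betw_imp_inj_on[OF rho_bij] .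
  have "rho i \<in> Rp" using bij_betw_apply[OF rho_bij] i by simp
  moreover have "inv_into {..<NN} rho (rho i) = i" using inv_into_f_f[OF inj] i by simp
  ultimately show ?thesis unfolding ext_def by simp
qed

lemma ext_inj:
  assumes "z \<in> free_mod {..<NN}" "z' \<in> free_mod {..<NN}" "ext z = ext z'" shows "z = z'"
proof
  fix i show "z i = z' i"
  proof (cases "i < NN")
    case True
    then show ?thesis using ext_rho[OF True, of z] ext_rho[OF True, of z'] assms(3) by simp
  next
    case False
    then show ?thesis using assms(1,2) unfolding free_mod_def by simp
  qed
qed

lemma ext_surj:
  assumes "z' \<in> free_mod Rp"
  shows "ext (\<lambda>i. if i < NN then z' (rho i) else 0) = z'"
proof
  fix r show "ext (\<lambda>i. if i < NN then z' (rho i) else 0) r = z' r"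
  proof (cases "r \<in> Rp")
    case True
    have "inv_into {..<NN} rho r \<in> {..<NN}" using bij_betw_apply[OF bij_betw_inv_into[OF rho_bij] True] .
    moreover have "rho (inv_into {..<NN} rho r) = r" using rho_bij True by (simp add: bij_betw_def f_inv_into_f)
    ultimately show ?thesis unfolding ext_def using True by simp
  next
    case False
    have "z' r = 0" using assms False unfolding free_mod_def by blast
    then show ?thesis unfolding ext_def if_not_P[OF False] by simp
  qed
qed

definition psi :: "(nat \<Rightarrow> 'a) \<times> (nat \<times> nat \<Rightarrow> 'a) set \<Rightarrow> (nat \<times> nat \<Rightarrow> 'a) set" where
  "psi = (\<lambda>(z, X). qadd U (cls U (ext z)) X)"

lemma T_elem: "X \<in> T \<Longrightarrow> \<exists>y. y \<in> free_mod C \<and> X = cls U (Lm y)"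
  using T_char by blast

lemma Lm_free_C_add: "(y :: nat \<Rightarrow> 'a) \<in> free_mod C \<Longrightarrow> y' \<in> free_mod C \<Longrightarrow> (\<lambda>k. y k + y' k) \<in> free_mod C"
  unfolding free_mod_def by auto

lemma Lm_free_C_scale: "(y :: nat \<Rightarrow> 'a) \<in> free_mod C \<Longrightarrow> (\<lambda>k. s * y k) \<in> free_mod C"
  unfolding free_mod_def by auto

lemma T_add: "X \<in> T \<Longrightarrow> Y \<in> T \<Longrightarrow> qadd U X Y \<in> T"
proof -
  assume "X \<in> T" "Y \<in> T"
  then obtain y y' where "y \<in> free_mod C" "X = cls U (Lm y)" "y' \<in> free_mod C" "Y = cls U (Lm y')"
    using T_elem by blast
  then have "qadd U X Y = cls U (Lm (\<lambda>k. y k + y' k))" "(\<lambda>k. y k + y' k) \<in> free_mod C"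
    using qadd_cls[OF smU] Lm_add Lm_free_C_add by auto
  then show ?thesis unfolding T_char by blast
qed

lemma T_scale: "X \<in> T \<Longrightarrow> qscale U s X \<in> T"
proof -
  assume "X \<in> T"
  then obtain y where "y \<in> free_mod C" "X = cls U (Lm y)"
    using T_elem by blast
  then have "qscale U s X = cls U (Lm (\<lambda>k. s * y k))" "(\<lambda>k. s * y k) \<in> free_mod C"
    using qscale_cls[OF smU] Lm_scale Lm_free_C_scale by auto
  then show ?thesis unfolding T_char by blast
qed

lemma psi_val: "y \<in> free_mod C \<Longrightarrow> psi (z, cls U (Lm y)) = cls U (\<lambda>r. ext z r + Lm y r)"
  unfolding psi_def using qadd_cls[OF smU] by simp

lemma iso_part:
  "mod_iso (coker R C J) (qadd U) (qscale U)
     (free_mod {..<NN} \<times> T)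
     (\<lambda>(v, X) (v', X'). ((\<lambda>i. v i + v' i), qadd U X X'))
     (\<lambda>s (v, X). ((\<lambda>i. s * v i), qscale U s X))"
proof (rule mod_iso_inv[where \<psi> = psi])
  show "\<And>x y. x \<in> free_mod {..<NN} \<times> T \<Longrightarrow> y \<in> free_mod {..<NN} \<times> T \<Longrightarrow>
      (case x of (v, X) \<Rightarrow> \<lambda>(v', X'). (\<lambda>i. (v :: nat \<Rightarrow> 'a) i + v' i, qadd U X X')) y \<in> free_mod {..<NN} \<times> T"
    using T_add unfolding free_mod_def by auto
  show "\<And>s x. x \<in> free_mod {..<NN} \<times> T \<Longrightarrow> (case x of (v, X) \<Rightarrow> (\<lambda>i. s * (v :: nat \<Rightarrow> 'a) i, qscale U s X)) \<in> free_mod {..<NN} \<times> T"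
    using T_scale unfolding free_mod_def by auto
  show "psi ((case x of (v, X) \<Rightarrow> \<lambda>(v', X'). (\<lambda>i. (v :: nat \<Rightarrow> 'a) i + v' i, qadd U X X')) y) = qadd U (psi x) (psi y)"
    if "x \<in> free_mod {..<NN} \<times> T" "y \<in> free_mod {..<NN} \<times> T" for x y
  proof -
    obtain z X where x1: "x = (z, X)" by (cases x)
    obtain z' X' where y1: "y = (z', X')" by (cases y)
    have "X \<in> T" "X' \<in> T" using that x1 y1 by auto
    note xy = x1 y1 this
    obtain w w' where w: "w \<in> free_mod C" "X = cls U (Lm w)" "w' \<in> free_mod C" "X' = cls U (Lm w')"
      using T_elem xy(3,4) by blast
    have "psi ((case x of (v, X) \<Rightarrow> \<lambda>(v', X'). (\<lambda>i. (v :: nat \<Rightarrow> 'a) i + v' i, qadd U X X')) y)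
        = psi (\<lambda>i. z i + z' i, cls U (Lm (\<lambda>k. w k + w' k)))"
      using xy w qadd_cls[OF smU] Lm_add by simp
    also have "\<dots> = cls U (\<lambda>r. ext (\<lambda>i. z i + z' i) r + Lm (\<lambda>k. w k + w' k) r)"
      by (rule psi_val[OF Lm_free_C_add[OF w(1,3)]])
    also have "\<dots> = qadd U (psi x) (psi y)"
      unfolding xy w psi_val[OF w(1)] psi_val[OF w(3)] qadd_cls[OF smU] ext_add Lm_add
      by (simp add: algebra_simps)
    finally show ?thesis .
  qed
  show "psi ((case x of (v, X) \<Rightarrow> (\<lambda>i. s * (v :: nat \<Rightarrow> 'a) i, qscale U s X))) = qscale U s (psi x)"
    if "x \<in> free_mod {..<NN} \<times> T" for s x
  proof -
    obtain z X where x1: "x = (z, X)" by (cases x)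
    have "X \<in> T" using that x1 by auto
    note xy = x1 this
    obtain w where w: "w \<in> free_mod C" "X = cls U (Lm w)"
      using T_elem xy(2) by blast
    have "psi ((case x of (v, X) \<Rightarrow> (\<lambda>i. s * (v :: nat \<Rightarrow> 'a) i, qscale U s X)))
        = psi (\<lambda>i. s * z i, cls U (Lm (\<lambda>k. s * w k)))"
      using xy w qscale_cls[OF smU] Lm_scale by simp
    also have "\<dots> = cls U (\<lambda>r. ext (\<lambda>i. s * z i) r + Lm (\<lambda>k. s * w k) r)"
      by (rule psi_val[OF Lm_free_C_scale[OF w(1)]])
    also have "\<dots> = qscale U s (psi x)"
      unfolding xy w psi_val[OF w(1)] qscale_cls[OF smU] ext_scale Lm_scale
      by (simp add: algebra_simps)
    finally show ?thesis .
  qed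
  show "bij_betw psi (free_mod {..<NN} \<times> T) (coker R C J)"
    unfolding bij_betw_def
  proof (intro conjI)
    show "inj_on psi (free_mod {..<NN} \<times> T)"
    proof (rule inj_onI)
      fix a b assume a: "a \<in> free_mod {..<NN} \<times> T" and b: "b \<in> free_mod {..<NN} \<times> T" and eq: "psi a = psi b"
      obtain z X where a1: "a = (z, X)" by (cases a)
      obtain z' X' where b1: "b = (z', X')" by (cases b)
      have "X \<in> T" "X' \<in> T" "z \<in> free_mod {..<NN}" "z' \<in> free_mod {..<NN}" using a b a1 b1 by auto
      note ab = a1 b1 this
      obtain w w' where w: "w \<in> free_mod C" "X = cls U (Lm w)" "w' \<in> free_mod C" "X' = cls U (Lm w')"
        using T_elem ab(3,4) by blast
      have "cls U (\<lambda>r. ext z r + Lm w r) = cls U (\<lambda>r. ext z' r + Lm w' r)"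
        using eq unfolding ab w psi_val[OF w(1)] psi_val[OF w(3)] .
      then have "(\<lambda>r. (ext z r + Lm w r) - (ext z' r + Lm w' r)) \<in> U"
        unfolding cls_eq_iff[OF smU] .
      then obtain x where x: "x \<in> free_mod C" "(\<lambda>r. (ext z r + Lm w r) - (ext z' r + Lm w' r)) = Lm (\<lambda>k. Delta * x k)"
        unfolding U_eq by blast
      define q where "q = (\<lambda>k. Delta * x k - w k + w' k)"
      have qC: "q \<in> free_mod C" using x(1) w(1,3) unfolding q_def free_mod_def by auto
      have eq2: "(\<lambda>r. ext z r - ext z' r) = Lm q"
      proof
        fix r
        have h1: "ext z r + Lm w r - (ext z' r + Lm w' r) = Lm (\<lambda>k. Delta * x k) r"
          using fun_cong[OF x(2), of r] by simp
        have h2: "Lm q r = Lm (\<lambda>k. Delta * x k) r - Lm w r + Lm w' r"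
          unfolding q_def Lm_def by (simp add: algebra_simps sum.distrib sum_subtractf)
        have "ext z r - ext z' r = (ext z r + Lm w r - (ext z' r + Lm w' r)) - Lm w r + Lm w' r"
          by (simp add: algebra_simps)
        also have "\<dots> = Lm (\<lambda>k. Delta * x k) r - Lm w r + Lm w' r" by (simp only: h1)
        also have "\<dots> = Lm q r" by (simp only: h2)
        finally show "ext z r - ext z' r = Lm q r" .
      qed
      have "\<forall>j\<in>C. Lm q (m, j) = 0"
      proof
        fix j assume "j \<in> C"
        then have "(m, j) \<notin> Rp" by simp
        then have "ext z (m, j) = 0" "ext z' (m, j) = 0" unfolding ext_def by auto
        then show "Lm q (m, j) = 0" using fun_cong[OF eq2, of "(m, j)"] by simp
      qed
      then have q0: "q = (\<lambda>k. 0)" by (rule Lm_inj'[OF qC])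
      have "ext z = ext z'"
      proof
        fix r show "ext z r = ext z' r" using fun_cong[OF eq2, of r] q0 Lm_zero by simp
      qed
      then have "z = z'" by (rule ext_inj[OF ab(5) ab(6)])
      moreover have "X = X'"
      proof -
        have "\<forall>k. Delta dvd (w k - w' k)"
        proof
          fix k
          have "Delta * x k - w k + w' k = 0" using fun_cong[OF q0, of k] unfolding q_def .
          then have "w k - w' k = Delta * x k" by (simp add: algebra_simps)
          then show "Delta dvd (w k - w' k)" by simp
        qed
        then show ?thesis unfolding w cls_Lm_eq[OF w(1,3)] .
      qed
      ultimately show "a = b" using ab by simp
    qed
    show "psi ` (free_mod {..<NN} \<times> T) = coker R C J"
    proof
      show "psi ` (free_mod {..<NN} \<times> T) \<subseteq> coker R C J"
      proof
        fix Y assume "Y \<in> psi ` (free_mod {..<NN} \<times> T)"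
        then obtain p where p: "p \<in> free_mod {..<NN} \<times> T" "Y = psi p" by (rule imageE)
        obtain z X where p1: "p = (z, X)" by (cases p)
        have "X \<in> T" using p(1) p1 by simp
        note zX = p(2)[unfolded p1] this
        obtain w where w: "w \<in> free_mod C" "X = cls U (Lm w)" using T_elem zX(2) by blast
        have "Y = cls U (\<lambda>r. ext z r + Lm w r)" unfolding zX w psi_val[OF w(1)] ..
        moreover have "(\<lambda>r. ext z r + Lm w r) \<in> free_mod R"
          by (rule free_add[OF ext_free_R Lm_free])
        ultimately show "Y \<in> coker R C J" unfolding coker_eq by blast
      qed
      show "coker R C J \<subseteq> psi ` (free_mod {..<NN} \<times> T)"
      proof
        fix Y assume "Y \<in> coker R C J"
        then obtain v where v: "v \<in> free_mod R" "Y = cls U v" unfolding coker_eq by blast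
        obtain y z' where yz: "y \<in> free_mod C" "z' \<in> free_mod Rp" "v = (\<lambda>r. Lm y r + z' r)"
          using decomp[OF v(1)] unfolding DS_def by blast
        define z where "z = (\<lambda>i. if i < NN then z' (rho i) else 0)"
        have zf: "z \<in> free_mod {..<NN}" unfolding z_def free_mod_def by simp
        have ez: "ext z = z'" unfolding z_def by (rule ext_surj[OF yz(2)])
        have "cls U (Lm y) \<in> T" unfolding T_char using yz(1) by blast
        then have mem: "(z, cls U (Lm y)) \<in> free_mod {..<NN} \<times> T" using zf by simp
        have "(\<lambda>r. z' r + Lm y r) = v" unfolding yz(3) by (rule ext) (simp add: add.commute)
        then have "psi (z, cls U (Lm y)) = Y"
          unfolding psi_val[OF yz(1)] ez v(2) by simp
        then show "Y \<in> psi ` (free_mod {..<NN} \<times> T)" by (rule image_eqI[OF _ mem, OF sym])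
      qed
    qed
  qed
qed

end

context jsetup
begin

definition wsum :: nat where "wsum = (\<Sum>i = 1..t. e i)"

lemma Delta_w: "Delta = pi ^ wsum" unfolding wsum_def by (rule Delta_pow)

lemma pi_nunit: "\<not> pi dvd 1" using dvr unfolding dvr_def by blast

lemma pow_unit_0: "u dvd 1 \<Longrightarrow> pi ^ j = u \<Longrightarrow> j = 0"
proof (rule ccontr)
  assume u: "u dvd 1" "pi ^ j = u" "j \<noteq> 0"
  then have "pi dvd pi ^ j" by (cases j) auto
  then have "pi dvd u" using u(2) by simp
  then have "pi dvd 1" using u(1) dvd_trans by blast
  then show False using pi_nunit by simp
qed

lemma val_pow: "val pi (pi ^ w) = w"
  unfolding val_def
proof (rule the_equality)
  show "\<exists>u. u dvd 1 \<and> pi ^ w = u * pi ^ w" by (intro exI[of _ 1]) simp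
  fix k assume "\<exists>u. u dvd 1 \<and> pi ^ w = u * pi ^ k"
  then obtain u where u: "u dvd 1" "pi ^ w = u * pi ^ k" by blast
  have pk: "pi ^ k \<noteq> 0" "pi ^ w \<noteq> 0" using pi_nz by simp_all
  show "k = w"
  proof (cases "k \<le> w")
    case True
    then have "pi ^ (w - k) * pi ^ k = u * pi ^ k" using u(2) by (simp add: power_add[symmetric])
    then have "pi ^ (w - k) = u" using mult_right_cancel[OF pk(1)] by blast
    then have "w - k = 0" using pow_unit_0[OF u(1)] by blast
    then show ?thesis using True by simp
  next
    case False
    then have "k = (k - w) + w" by simp
    then have "pi ^ k = pi ^ (k - w) * pi ^ w" by (metis power_add)
    then have "1 * pi ^ w = (u * pi ^ (k - w)) * pi ^ w" using u(2)
      by (simp add: mult.assoc)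
    then have "1 = u * pi ^ (k - w)" using mult_right_cancel[OF pk(2)] by blast
    then have "pi ^ (k - w) dvd 1" by (metis dvdI mult.commute)
    then have "k - w = 0" using pow_unit_0[of "pi ^ (k - w)" "k - w"] by blast
    then show ?thesis using False by simp
  qed
qed

definition hexp :: "nat \<Rightarrow> nat \<Rightarrow> nat" where
  "hexp i k = (if k - 1 < i div wsum then 0 else if k - 1 = i div wsum then wsum - i mod wsum else wsum)"

definition Mc :: "nat \<Rightarrow> (nat \<Rightarrow> 'a) set" where
  "Mc i = {y \<in> free_mod C. \<forall>k\<in>C. pi ^ hexp i k dvd y k}"

lemma hexp_0: "k \<ge> 1 \<Longrightarrow> hexp 0 k = wsum"
  unfolding hexp_def by auto

lemma hexp_L: "k \<in> C \<Longrightarrow> hexp ((n - t) * wsum) k = 0"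
proof (cases "wsum = 0")
  case True then show ?thesis unfolding hexp_def by simp
next
  case False
  assume k: "k \<in> C"
  have "(n - t) * wsum div wsum = n - t" using False by simp
  moreover have "k - 1 < n - t" using k by auto
  ultimately show ?thesis unfolding hexp_def by simp
qed

lemma hexp_step:
  assumes w: "wsum > 0" and k: "k \<ge> 1"
  shows "k \<noteq> i div wsum + 1 \<Longrightarrow> hexp (Suc i) k = hexp i k"
    and "k = i div wsum + 1 \<Longrightarrow> hexp i k = Suc (hexp (Suc i) k)"
proof -
  have r: "i mod wsum < wsum" using w by simp
  consider (A) "Suc (i mod wsum) \<noteq> wsum" | (B) "Suc (i mod wsum) = wsum" by blast
  note cs = this
  {
    assume kk: "k \<noteq> i div wsum + 1"
    show "hexp (Suc i) k = hexp i k"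
    proof (cases rule: cs)
      case A
      then have "Suc i div wsum = i div wsum" "Suc i mod wsum = Suc (i mod wsum)"
        using div_Suc[of i wsum] mod_Suc[of i wsum] by auto
      then show ?thesis unfolding hexp_def using kk k by auto
    next
      case B
      then have "Suc i div wsum = Suc (i div wsum)" "Suc i mod wsum = 0"
        using div_Suc[of i wsum] mod_Suc[of i wsum] by auto
      then show ?thesis unfolding hexp_def using kk k B by auto
    qed
  }
  {
    assume kk: "k = i div wsum + 1"
    show "hexp i k = Suc (hexp (Suc i) k)"
    proof (cases rule: cs)
      case A
      then have "Suc i div wsum = i div wsum" "Suc i mod wsum = Suc (i mod wsum)"
        using div_Suc[of i wsum] mod_Suc[of i wsum] by auto
      then show ?thesis unfolding hexp_def using kk k r A by auto
    next
      case B
      then have "Suc i div wsum = Suc (i div wsum)" "Suc i mod wsum = 0"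
        using div_Suc[of i wsum] mod_Suc[of i wsum] by auto
      then show ?thesis unfolding hexp_def using kk k B by auto
    qed
  }
qed

end

context jsetup
begin

lemma unit_of_not_dvd:
  assumes "c \<noteq> 0" "\<not> pi dvd c" shows "c dvd 1"
proof -
  obtain u j where uj: "u dvd 1" "c = u * pi ^ j" using dvr assms(1) unfolding dvr_def by blast
  have "j = 0"
  proof (rule ccontr)
    assume "j \<noteq> 0"
    then have "pi dvd pi ^ j" by (cases j) auto
    then have "pi dvd c" using uj(2) by simp
    then show False using assms(2) by simp
  qed
  then show ?thesis using uj by simp
qed

definition Mh :: "(nat \<Rightarrow> nat) \<Rightarrow> (nat \<Rightarrow> 'a) set" where
  "Mh h = {y \<in> free_mod C. \<forall>k\<in>C. pi ^ h k dvd y k}"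

lemma sm_Mh: "sm (Mh h)"
  unfolding sm_def Mh_def free_mod_def by (auto simp: dvd_add)

lemma Mh_mono: "(\<And>k. k \<in> C \<Longrightarrow> h' k \<le> h k) \<Longrightarrow> Mh h \<subseteq> Mh h'"
  unfolding Mh_def using power_le_dvd by blast

lemma cover:
  assumes k0: "k0 \<in> C" and hk0: "h k0 = Suc (h' k0)" and oth: "\<And>k. k \<in> C \<Longrightarrow> k \<noteq> k0 \<Longrightarrow> h' k = h k"
    and W: "sm W" "Mh h \<subseteq> W" "W \<subseteq> Mh h'"
  shows "W = Mh h \<or> W = Mh h'"
proof (cases "W = Mh h")
  case True then show ?thesis by simp
next
  case False
  then obtain s where s: "s \<in> W" "s \<notin> Mh h" using W(2) by blast
  have sB: "s \<in> Mh h'" using s(1) W(3) by blast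
  then have sf: "s \<in> free_mod C" and sd: "\<forall>k\<in>C. pi ^ h' k dvd s k" unfolding Mh_def by auto
  have nd: "\<not> pi ^ h k0 dvd s k0"
  proof
    assume d0: "pi ^ h k0 dvd s k0"
    have "\<forall>k\<in>C. pi ^ h k dvd s k"
    proof
      fix k assume k: "k \<in> C"
      show "pi ^ h k dvd s k"
      proof (cases "k = k0")
        case True then show ?thesis using d0 by simp
      next
        case False
        have "pi ^ h' k dvd s k" using sd k by blast
        then show ?thesis using oth[OF k False] by simp
      qed
    qed
    then show False using s(2) sf unfolding Mh_def by blast
  qed
  obtain c where c: "s k0 = pi ^ h' k0 * c" using sd k0 by (meson dvdE)
  have "\<not> pi dvd c"
  proof
    assume "pi dvd c"
    then obtain c' where "c = pi * c'" by (meson dvdE)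
    then have "s k0 = pi ^ h k0 * c'" using c hk0 by (simp add: mult.assoc mult.commute mult.left_commute)
    then show False using nd by simp
  qed
  moreover have "c \<noteq> 0" using nd c by auto
  ultimately have "c dvd 1" using unit_of_not_dvd by blast
  then obtain ci where ci: "1 = c * ci" by (meson dvdE)
  have "Mh h' \<subseteq> W"
  proof
    fix b assume b: "b \<in> Mh h'"
    then have bf: "b \<in> free_mod C" and bd: "\<forall>k\<in>C. pi ^ h' k dvd b k" unfolding Mh_def by auto
    obtain d where d: "b k0 = pi ^ h' k0 * d" using bd k0 by (meson dvdE)
    define b' where "b' = (\<lambda>k. b k - (d * ci) * s k)"
    have "b' \<in> Mh h"
      unfolding Mh_def
    proof (intro CollectI conjI ballI)
      show "b' \<in> free_mod C" using bf sf unfolding b'_def free_mod_def by auto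
      fix k assume k: "k \<in> C"
      show "pi ^ h k dvd b' k"
      proof (cases "k = k0")
        case True
        have "b' k0 = pi ^ h' k0 * d - (d * ci) * (pi ^ h' k0 * c)" unfolding b'_def using d c by simp
        also have "\<dots> = pi ^ h' k0 * d * (1 - c * ci)" by (simp add: algebra_simps)
        also have "\<dots> = 0" using ci by simp
        finally show ?thesis using True by simp
      next
        case False
        have "pi ^ h' k dvd b k" "pi ^ h' k dvd s k" using bd sd k by blast+
        then have "pi ^ h k dvd b k" "pi ^ h k dvd s k" using oth[OF k False] by simp_all
        then show ?thesis unfolding b'_def by (simp add: dvd_diff)
      qed
    qed
    then have b'W: "b' \<in> W" using W(2) by blast
    have "(\<lambda>k. (d * ci) * s k) \<in> W" using smD(3)[OF W(1) s(1)] .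
    from smD(2)[OF W(1) b'W this] have "(\<lambda>k. b' k + (d * ci) * s k) \<in> W" .
    moreover have "(\<lambda>k. b' k + (d * ci) * s k) = b" unfolding b'_def by simp
    ultimately show "b \<in> W" by simp
  qed
  then show ?thesis using W(3) by blast
qed

lemma strict:
  assumes k0: "k0 \<in> C" and hk0: "h k0 = Suc (h' k0)"
  shows "Mh h \<noteq> Mh h'"
proof -
  define y where "y = (\<lambda>k. if k = k0 then pi ^ h' k0 else 0)"
  have "y \<in> Mh h'" unfolding Mh_def y_def free_mod_def using k0 by auto
  moreover have "y \<notin> Mh h"
  proof
    assume "y \<in> Mh h"
    then have "pi ^ h k0 dvd y k0" unfolding Mh_def using k0 by blast
    then have "pi ^ h k0 dvd pi ^ h' k0" unfolding y_def by simp
    then have "pi * pi ^ h' k0 dvd 1 * pi ^ h' k0" using hk0 by simp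
    then have "pi dvd 1" using pi_nz by (subst (asm) dvd_mult_cancel_right) auto
    then show False using pi_nunit by simp
  qed
  ultimately show ?thesis by blast
qed

end

context jsetup
begin

abbreviation "LL \<equiv> (n - t) * wsum"

lemma step_facts:
  assumes i: "i < LL"
  shows "i div wsum + 1 \<in> C" "wsum > 0"
    "\<And>k. k \<in> C \<Longrightarrow> k \<noteq> i div wsum + 1 \<Longrightarrow> hexp (Suc i) k = hexp i k"
    "hexp i (i div wsum + 1) = Suc (hexp (Suc i) (i div wsum + 1))"
proof -
  show w: "wsum > 0" using i by (cases "wsum = 0") auto
  have "i div wsum < n - t" using less_mult_imp_div_less[OF i] .
  then show "i div wsum + 1 \<in> C" by auto
  show "\<And>k. k \<in> C \<Longrightarrow> k \<noteq> i div wsum + 1 \<Longrightarrow> hexp (Suc i) k = hexp i k"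
    using hexp_step(1)[OF w] by auto
  show "hexp i (i div wsum + 1) = Suc (hexp (Suc i) (i div wsum + 1))"
    using hexp_step(2)[OF w] by auto
qed

lemma M_mono: "i < LL \<Longrightarrow> Mh (hexp i) \<subseteq> Mh (hexp (Suc i))"
proof (rule Mh_mono)
  fix k assume i: "i < LL" and k: "k \<in> C"
  show "hexp (Suc i) k \<le> hexp i k"
  proof (cases "k = i div wsum + 1")
    case True then show ?thesis using step_facts(4)[OF i] by simp
  next
    case False then show ?thesis using step_facts(3)[OF i k] by simp
  qed
qed

lemma M_cover:
  assumes i: "i < LL" and W: "sm W" "Mh (hexp i) \<subseteq> W" "W \<subseteq> Mh (hexp (Suc i))"
  shows "W = Mh (hexp i) \<or> W = Mh (hexp (Suc i))"
proof (rule cover[of "i div wsum + 1" "hexp i" "hexp (Suc i)"])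
  show "i div wsum + 1 \<in> C" by (rule step_facts(1)[OF i])
  show "hexp i (i div wsum + 1) = Suc (hexp (Suc i) (i div wsum + 1))" by (rule step_facts(4)[OF i])
  show "\<And>k. k \<in> C \<Longrightarrow> k \<noteq> i div wsum + 1 \<Longrightarrow> hexp (Suc i) k = hexp i k" by (rule step_facts(3)[OF i])
qed (use W in auto)

lemma M_strict: assumes i: "i < LL" shows "Mh (hexp i) \<noteq> Mh (hexp (Suc i))"
  by (rule strict[of "i div wsum + 1" "hexp i" "hexp (Suc i)",
        OF step_facts(1)[OF i] step_facts(4)[OF i]])

lemma Mbot_char: "Mh (hexp 0) = {y \<in> free_mod C. \<forall>k\<in>C. Delta dvd y k}"
  unfolding Mh_def Delta_w using hexp_0 by auto

lemma Mtop_char: "Mh (hexp LL) = free_mod C"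
  unfolding Mh_def using hexp_L by auto

lemma M0_le: "i \<le> LL \<Longrightarrow> Mh (hexp 0) \<subseteq> Mh (hexp i)"
  using mono_chain[of LL "\<lambda>i. Mh (hexp i)" 0 i] M_mono by auto

definition Ymap :: "(nat \<times> nat \<Rightarrow> 'a) set set \<Rightarrow> (nat \<Rightarrow> 'a) set" where
  "Ymap S = {y \<in> free_mod C. cls U (Lm y) \<in> S}"

lemma qzero_Lm: "qzero U = cls U (Lm (\<lambda>k. 0))"
  unfolding qzero_def Lm_zero ..

lemma Ymap_props:
  assumes S: "submod T (qadd U) (qscale U) (qzero U) S"
  shows "sm (Ymap S)" "Mh (hexp 0) \<subseteq> Ymap S" "Ymap S \<subseteq> Mh (hexp LL)"
proof -
  have Sz: "qzero U \<in> S" and Sa: "\<And>x y. x \<in> S \<Longrightarrow> y \<in> S \<Longrightarrow> qadd U x y \<in> S"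
    and Ss: "\<And>s x. x \<in> S \<Longrightarrow> qscale U s x \<in> S"
    using S unfolding submod_def by auto
  show "sm (Ymap S)"
    unfolding sm_def
  proof (intro conjI ballI allI)
    show "(\<lambda>i. 0) \<in> Ymap S" unfolding Ymap_def using Sz qzero_Lm by (simp add: free_mod_def)
    fix x y assume "x \<in> Ymap S" "y \<in> Ymap S"
    then have "x \<in> free_mod C" "y \<in> free_mod C" "cls U (Lm x) \<in> S" "cls U (Lm y) \<in> S" unfolding Ymap_def by auto
    then show "(\<lambda>i. x i + y i) \<in> Ymap S"
      unfolding Ymap_def using Sa[of "cls U (Lm x)" "cls U (Lm y)"] qadd_cls[OF smU] Lm_add Lm_free_C_add by simp
  next
    fix s x assume "x \<in> Ymap S"
    then have "x \<in> free_mod C" "cls U (Lm x) \<in> S" unfolding Ymap_def by auto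
    then show "(\<lambda>i. s * x i) \<in> Ymap S"
      unfolding Ymap_def using Ss[of "cls U (Lm x)" s] qscale_cls[OF smU] Lm_scale Lm_free_C_scale by simp
  qed
  show "Mh (hexp 0) \<subseteq> Ymap S"
  proof
    fix y assume "y \<in> Mh (hexp 0)"
    then have y: "y \<in> free_mod C" "\<forall>k\<in>C. Delta dvd y k" unfolding Mbot_char by auto
    have z: "(\<lambda>k. 0) \<in> free_mod C" by (simp add: free_mod_def)
    have "\<forall>k. Delta dvd (y k - 0)"
    proof
      fix k show "Delta dvd (y k - 0)"
      proof (cases "k \<in> C")
        case True then show ?thesis using y(2) by simp
      next
        case False then have "y k = 0" using y(1) unfolding free_mod_def by blast
        then show ?thesis by simp
      qed
    qed
    then have "cls U (Lm y) = qzero U" unfolding qzero_Lm cls_Lm_eq[OF y(1) z] .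
    then show "y \<in> Ymap S" unfolding Ymap_def using y(1) Sz by simp
  qed
  show "Ymap S \<subseteq> Mh (hexp LL)" unfolding Mtop_char Ymap_def by blast
qed

lemma Ymap_strict:
  assumes "S \<subseteq> S'" "S \<noteq> S'" "S' \<subseteq> T" shows "Ymap S \<noteq> Ymap S'"
proof -
  obtain X where X: "X \<in> S'" "X \<notin> S" using assms(1,2) by blast
  then obtain y where y: "y \<in> free_mod C" "X = cls U (Lm y)" using assms(3) T_elem by blast
  have "y \<in> Ymap S'" "y \<notin> Ymap S" unfolding Ymap_def using X y by auto
  then show ?thesis by blast
qed

lemma upper:
  assumes ch: "submod_chain T (qadd U) (qscale U) (qzero U) Sq k"
  shows "k \<le> LL"
proof -
  have sub: "\<forall>i\<le>k. submod T (qadd U) (qscale U) (qzero U) (Sq i)" and str: "\<forall>i<k. Sq i \<subset> Sq (Suc i)"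
    using ch unfolding submod_chain_def by auto
  have "card {j. j < k \<and> Ymap (Sq j) \<noteq> Ymap (Sq (Suc j))} \<le> LL"
  proof (rule chain_bound[where M = "\<lambda>i. Mh (hexp i)"])
    show "\<forall>i\<le>LL. sm (Mh (hexp i))" by (simp add: sm_Mh)
    show "\<forall>i<LL. Mh (hexp i) \<subseteq> Mh (hexp (Suc i))" by (simp add: M_mono)
    show "\<forall>i<LL. \<forall>W. sm W \<and> Mh (hexp i) \<subseteq> W \<and> W \<subseteq> Mh (hexp (Suc i)) \<longrightarrow>
        W = Mh (hexp i) \<or> W = Mh (hexp (Suc i))"
    proof (intro allI impI)
      fix i W assume "i < LL" "sm W \<and> Mh (hexp i) \<subseteq> W \<and> W \<subseteq> Mh (hexp (Suc i))"
      then show "W = Mh (hexp i) \<or> W = Mh (hexp (Suc i))" using M_cover[of i W] by simp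
    qed
    show "\<forall>j\<le>k. sm (Ymap (Sq j)) \<and> Mh (hexp 0) \<subseteq> Ymap (Sq j) \<and> Ymap (Sq j) \<subseteq> Mh (hexp LL)"
    proof (intro allI impI)
      fix j assume "j \<le> k"
      then have "submod T (qadd U) (qscale U) (qzero U) (Sq j)" using sub by simp
      from Ymap_props[OF this]
      show "sm (Ymap (Sq j)) \<and> Mh (hexp 0) \<subseteq> Ymap (Sq j) \<and> Ymap (Sq j) \<subseteq> Mh (hexp LL)" by simp
    qed
    show "\<forall>j<k. Ymap (Sq j) \<subseteq> Ymap (Sq (Suc j))"
    proof (intro allI impI)
      fix j assume "j < k"
      then have "Sq j \<subseteq> Sq (Suc j)" using str by auto
      then show "Ymap (Sq j) \<subseteq> Ymap (Sq (Suc j))" unfolding Ymap_def by blast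
    qed
  qed
  moreover have "{j. j < k \<and> Ymap (Sq j) \<noteq> Ymap (Sq (Suc j))} = {..<k}"
  proof (intro set_eqI iffI)
    fix j assume "j \<in> {..<k}"
    then have j: "j < k" by simp
    have "submod T (qadd U) (qscale U) (qzero U) (Sq (Suc j))" using sub j by simp
    then have sT: "Sq (Suc j) \<subseteq> T" unfolding submod_def by blast
    have ps: "Sq j \<subset> Sq (Suc j)" using str j by simp
    have "Ymap (Sq j) \<noteq> Ymap (Sq (Suc j))" using Ymap_strict[OF psubset_imp_subset[OF ps] _ sT] ps by blast
    then show "j \<in> {j. j < k \<and> Ymap (Sq j) \<noteq> Ymap (Sq (Suc j))}" using j by simp
  qed simp
  ultimately show ?thesis by simp
qed

definition Sq :: "nat \<Rightarrow> (nat \<times> nat \<Rightarrow> 'a) set set" where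
  "Sq i = {cls U (Lm y) | y. y \<in> Mh (hexp i)}"

lemma Mh_free: "Mh h \<subseteq> free_mod C" unfolding Mh_def by blast

lemma Sq_submod: "submod T (qadd U) (qscale U) (qzero U) (Sq i)"
  unfolding submod_def
proof (intro conjI ballI allI)
  show "Sq i \<subseteq> T" unfolding Sq_def T_char using Mh_free by blast
  have "(\<lambda>k. 0) \<in> Mh (hexp i)" by (rule smD(1)[OF sm_Mh])
  then show "qzero U \<in> Sq i" unfolding Sq_def qzero_Lm by blast
  fix X Y assume "X \<in> Sq i" "Y \<in> Sq i"
  then obtain x y where "x \<in> Mh (hexp i)" "X = cls U (Lm x)" "y \<in> Mh (hexp i)" "Y = cls U (Lm y)"
    unfolding Sq_def by blast
  note xy = this
  have "qadd U X Y = cls U (Lm (\<lambda>k. x k + y k))" unfolding xy(2,4) qadd_cls[OF smU] Lm_add ..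
  moreover have "(\<lambda>k. x k + y k) \<in> Mh (hexp i)" by (rule smD(2)[OF sm_Mh xy(1) xy(3)])
  ultimately show "qadd U X Y \<in> Sq i" unfolding Sq_def by blast
next
  fix s X assume "X \<in> Sq i"
  then obtain x where "x \<in> Mh (hexp i)" "X = cls U (Lm x)"
    unfolding Sq_def by blast
  note xy = this
  have "qscale U s X = cls U (Lm (\<lambda>k. s * x k))" unfolding xy(2) qscale_cls[OF smU] Lm_scale ..
  moreover have "(\<lambda>k. s * x k) \<in> Mh (hexp i)" by (rule smD(3)[OF sm_Mh xy(1)])
  ultimately show "qscale U s X \<in> Sq i" unfolding Sq_def by blast
qed

lemma Ymap_Sq: assumes "i \<le> LL" shows "Ymap (Sq i) = Mh (hexp i)"
proof
  show "Mh (hexp i) \<subseteq> Ymap (Sq i)" unfolding Ymap_def Sq_def using Mh_free by blast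
  show "Ymap (Sq i) \<subseteq> Mh (hexp i)"
  proof
    fix y assume "y \<in> Ymap (Sq i)"
    then obtain y' where y: "y \<in> free_mod C" "y' \<in> Mh (hexp i)" "cls U (Lm y) = cls U (Lm y')"
      unfolding Ymap_def Sq_def by blast
    have y'f: "y' \<in> free_mod C" using y(2) Mh_free by blast
    have dd: "\<forall>k. Delta dvd (y k - y' k)" using y(3) cls_Lm_eq[OF y(1) y'f] by simp
    have "(\<lambda>k. y k - y' k) \<in> Mh (hexp 0)" unfolding Mbot_char
      using free_mod_C_diff[OF y(1) y'f] dd by simp
    then have "(\<lambda>k. y k - y' k) \<in> Mh (hexp i)" using M0_le[OF assms] by blast
    from smD(2)[OF sm_Mh y(2) this] have "(\<lambda>k. y' k + (y k - y' k)) \<in> Mh (hexp i)" .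
    then show "y \<in> Mh (hexp i)" by simp
  qed
qed

lemma lower: "submod_chain T (qadd U) (qscale U) (qzero U) Sq LL"
  unfolding submod_chain_def
proof (intro conjI allI impI)
  fix i show "submod T (qadd U) (qscale U) (qzero U) (Sq i)" by (rule Sq_submod)
next
  fix i assume i: "i < LL"
  have "Sq i \<subseteq> Sq (Suc i)" unfolding Sq_def using M_mono[OF i] by blast
  moreover have "Sq i \<noteq> Sq (Suc i)" using M_strict[OF i] Ymap_Sq[of i] Ymap_Sq[of "Suc i"] i by auto
  ultimately show "Sq i \<subset> Sq (Suc i)" by blast
qed

lemma has_len: "has_length T (qadd U) (qscale U) (qzero U) LL"
  unfolding has_length_def using lower upper by blast

lemma main:
  "let t = m - 1;
             R = {1..m} \<times> {1..n};
             C = {1..n - t};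
             J = jac_eval m n (pt pi m e);
             U = mat_image C J;
             M = coker R C J;
             T = torsion_part R C J;
             w = val pi (\<Prod>i = 1..t. pi ^ e i)
         in mod_iso M (qadd U) (qscale U)
              (free_mod {..<m * n - (n - t)} \<times> T)
              (\<lambda>(v, X) (v', X'). ((\<lambda>i. v i + v' i), qadd U X X'))
              (\<lambda>s (v, X). ((\<lambda>i. s * v i), qscale U s X))
          \<and> has_length T (qadd U) (qscale U) (qzero U) ((n - t) * w)"
proof -
  have v: "val pi (\<Prod>i = 1..t. pi ^ e i) = wsum"
    using val_pow[of wsum] Delta_w unfolding Delta_def by simp
  show ?thesis unfolding Let_def v
    using iso_part[unfolded card_Rp] has_len by (intro conjI)
qed

end

theorem corollary5p7:
  fixes pi :: "'a::idom" and m n :: nat and e :: "nat \<Rightarrow> nat"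
  assumes "dvr pi"
    and "2 \<le> m" and "m \<le> n"
    and "\<And>i j. 1 \<le> i \<Longrightarrow> i \<le> j \<Longrightarrow> j \<le> m - 1 \<Longrightarrow> e i \<le> e j"
  shows "let t = m - 1;
             R = {1..m} \<times> {1..n};
             C = {1..n - t};
             J = jac_eval m n (pt pi m e);
             U = mat_image C J;
             M = coker R C J;
             T = torsion_part R C J;
             w = val pi (\<Prod>i = 1..t. pi ^ e i)
         in mod_iso M (qadd U) (qscale U)
              (free_mod {..<m * n - (n - t)} \<times> T)
              (\<lambda>(v, X) (v', X'). ((\<lambda>i. v i + v' i), qadd U X X'))
              (\<lambda>s (v, X). ((\<lambda>i. s * v i), qscale U s X))
          \<and> has_length T (qadd U) (qscale U) (qzero U) ((n - t) * w)"
proof -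
  interpret jsetup pi m n e using assms(1-3) by unfold_locales
  show ?thesis by (rule main)
qed

end
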